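(* Let $N,l$ be positive integers, $m=2l$, $a=\begin{bmatrix}0&1\\-1&0\end{bmatrix}$, and for $z\in\mathbb{R}^l$ let $S(z)=\mathrm{diag}(z)\otimes a$. Let $\omega=\mathrm{col}(\omega_{01},\dots,\omega_{0l})\in\mathbb{R}^l$ with $\omega_{0k}>0$ for all $k$ and such that all eigenvalues of $S(\omega)$ are simple (i.e. the $\omega_{0k}$ are pairwise distinct), and consider the leader system $\dot v=S(\omega)v$, $v\in\mathbb{R}^m$. Let $\bar{\mathcal G}$ be a digraph with node set $\{0,1,\dots,N\}$ such that $\bar{\mathcal G}$ contains a spanning tree rooted at node $0$ and the subgraph $\mathcal G$ induced on $\{1,\dots,N\}$ (obtained by removing all edges between node $0$ and the other nodes) is undirected. For $i=1,\dots,N$ let $\bar{\mathcal N}_i=\{j:(j,i)\text{ is an edge of }\bar{\mathcal G}\}$. Consider, for $i=1,\dots,N$, $$\dot\eta_i=S(\omega_i)\eta_i+\mu_1 e_{vi},\qquad \dot\omega_i=\mu_2\,\phi(e_{vi})\,\eta_i,\qquad e_{vi}=\sum_{j\in\bar{\mathcal N}_i}(\eta_j-\eta_i),$$ where $\eta_0=v$, $\eta_i\in\mathbb{R}^m$, $\omega_i\in\mathbb{R}^l$, $\mu_1,\mu_2>0$, and for $x\in\mathbb{R}^m$, $\phi(x)\in\mathbb{R}^{l\times m}$ is the matrix whose $k$-th row has entry $-x_{2k}$ in column $2k-1$, $x_{2k-1}$ in column $2k$, and zeros elsewhere. Let $\tilde\omega=\mathrm{col}(\omega_1-\omega,\dots,\omega_N-\omega)$.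 If $\mathrm{col}(v_{2i-1}(0),v_{2i}(0))\neq0$ for all $i=1,\dots,l$, then (i) $v(t)$ is persistently exciting; and (ii) for any initial conditions $\eta_i(0),\omega_i(0)$, $\lim_{t\to\infty}\tilde\omega(t)=0$.
   Context: A bounded piecewise continuous function $f:[0,\infty)\to\mathbb{R}^n$ is persistently exciting (PE) if there exist constants $\epsilon>0$, $t_0\ge 0$, $T_0>0$ such that $\frac{1}{T_0}\int_t^{t+T_0}f(s)f(s)^T\,ds\ge\epsilon I_n$ for all $t\ge t_0$. $\otimes$ is the Kronecker product; $\mathrm{col}(\cdot)$ stacks vectors into a column. *)

theory Defs
  imports "HOL-Analysis.Analysis"
begin

text \<open>Conventions: vectors in R^n are functions nat => real with components 0..n-1
  (0-based; component 2k, 2k+1 here correspond to 2k+1, 2k+2 in the paper);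
  matrices are functions nat => nat => real with explicit sizes.\<close>

type_synonym rvec = "nat \<Rightarrow> real"
type_synonym rmat = "nat \<Rightarrow> nat \<Rightarrow> real"

definition mulv :: "nat \<Rightarrow> rmat \<Rightarrow> rvec \<Rightarrow> rvec" where
  "mulv n M x = (\<lambda>i. \<Sum>j<n. M i j * x j)"

definition diagm :: "rvec \<Rightarrow> rmat" where
  "diagm z = (\<lambda>i j. if i = j then z i else 0)"

definition kron :: "nat \<Rightarrow> nat \<Rightarrow> rmat \<Rightarrow> rmat \<Rightarrow> rmat" where
  "kron p q A B = (\<lambda>i j. A (i div p) (j div q) * B (i mod p) (j mod q))"

definition amat :: rmat where
  "amat = (\<lambda>i j. if i = 0 \<and> j = 1 then 1 else if i = 1 \<and> j = 0 then -1 else 0)"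

definition Smat :: "rvec \<Rightarrow> rmat" where
  "Smat z = kron 2 2 (diagm z) amat"

definition phim :: "rvec \<Rightarrow> rmat" where
  "phim x = (\<lambda>k j. if j = 2*k then - x (2*k+1) else if j = 2*k+1 then x (2*k) else 0)"

definition PE :: "nat \<Rightarrow> (real \<Rightarrow> rvec) \<Rightarrow> bool" where
  "PE n f \<longleftrightarrow>
     (\<exists>B. \<forall>t\<ge>0. \<forall>k<n. \<bar>f t k\<bar> \<le> B) \<and>
     (\<exists>\<epsilon>>0. \<exists>t0\<ge>0. \<exists>T0>0. \<forall>t\<ge>t0. \<forall>x::rvec.
        (\<Sum>i<n. \<Sum>j<n. x i * ((1/T0) * integral {t..t+T0} (\<lambda>s. f s i * f s j)
            - (if i = j then \<epsilon> else 0)) * x j) \<ge> 0)"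

end

theory Submission
  imports Defs
begin

definition D0 :: "(real \<Rightarrow> real) \<Rightarrow> (real \<Rightarrow> real) \<Rightarrow> bool" where
  "D0 f f' \<longleftrightarrow> (\<forall>t\<ge>0. (f has_real_derivative f' t) (at t within {0..}))"

lemma D0_mvt:
  assumes "D0 f f'" "0 \<le> a" "a < b"
  shows "\<exists>z. a < z \<and> z < b \<and> f b - f a = (b - a) * f' z"
proof -
  have d: "(f has_real_derivative f' x) (at x within {0..})" if "x \<ge> 0" for x
    using assms(1) that unfolding D0_def by auto
  have "continuous_on {0..} f"
    by (rule DERIV_continuous_on[of _ _ f']) (use d in auto)
  then have cont: "continuous_on {a..b} f"
    by (rule continuous_on_subset) (use assms in auto)
  have da: "(f has_real_derivative f' x) (at x)" if "a < x" for x
  proof -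
    have "x \<in> interior {0::real..}" using that assms by auto
    then have "at x within {0..} = at x" by (rule at_within_interior)
    then show ?thesis using d[of x] that assms by auto
  qed
  obtain l z where "a < z" "z < b" "DERIV f z :> l" "f b - f a = (b - a) * l"
    using MVT[OF assms(3) cont] da real_differentiable_def by blast
  moreover have "l = f' z" using DERIV_unique[OF \<open>DERIV f z :> l\<close> da[OF \<open>a < z\<close>]] .
  ultimately show ?thesis by blast
qed

lemma D0_antimono:
  assumes "D0 f f'" "\<forall>t\<ge>0. f' t \<le> 0" "0 \<le> s" "s \<le> t"
  shows "f t \<le> f s"
proof (cases "s = t")
  case False
  then obtain z where "s < z" "f t - f s = (t - s) * f' z"
    using D0_mvt[OF assms(1,3)] assms(4) by force
  moreover have "f' z \<le> 0" using assms(2,3) \<open>s < z\<close> by auto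
  moreover have "(t - s) * f' z \<le> 0" by (rule mult_nonneg_nonpos) (use assms(4) \<open>f' z \<le> 0\<close> in auto)
  ultimately show ?thesis by linarith
qed simp

lemma D0_const:
  assumes "D0 f f'" "\<forall>t\<ge>0. f' t = 0" "0 \<le> t"
  shows "f t = f 0"
proof -
  have "f t \<le> f 0" by (rule D0_antimono[OF assms(1)]) (use assms in auto)
  moreover have "(-f) t \<le> (-f) 0"
    by (rule D0_antimono[of _ "\<lambda>t. - f' t"]) (use assms in \<open>auto simp: D0_def intro!: derivative_eq_intros\<close>)
  ultimately show ?thesis by simp
qed

lemma D0_lip:
  assumes "D0 f f'" "\<forall>t\<ge>0. \<bar>f' t\<bar> \<le> B" "0 \<le> s" "0 \<le> t"
  shows "\<bar>f s - f t\<bar> \<le> B * \<bar>s - t\<bar>"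
proof -
  have *: "\<bar>f b - f a\<bar> \<le> B * \<bar>b - a\<bar>" if ab: "0 \<le> a" "a < b" for a b
  proof -
    obtain z where "a < z" "f b - f a = (b - a) * f' z" using D0_mvt[OF assms(1) ab] by blast
    moreover have "\<bar>f' z\<bar> \<le> B" using assms(2) ab \<open>a < z\<close> by auto
    ultimately show ?thesis using ab by (simp add: abs_mult mult.commute mult_left_mono)
  qed
  consider "s = t" | "s < t" | "t < s" by linarith
  then show ?thesis
  proof cases
    case 1 then show ?thesis by simp
  next
    case 2 then show ?thesis using *[of s t] assms by (simp add: abs_minus_commute)
  next
    case 3 then show ?thesis using *[of t s] assms by simp
  qed
qed

lemma barbalat:
  assumes "D0 f f'"
    and incr: "\<forall>\<eta>>0. \<forall>\<delta>>0. \<exists>T. \<forall>t\<ge>T. \<bar>f (t + \<delta>) - f t\<bar> < \<eta>"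
    and lip: "\<forall>s\<ge>0. \<forall>t\<ge>0. \<bar>f' s - f' t\<bar> \<le> K * \<bar>s - t\<bar>"
  shows "(f' \<longlongrightarrow> 0) at_top"
proof (rule tendstoI)
  fix \<epsilon> :: real assume "\<epsilon> > 0"
  define K' where "K' = \<bar>K\<bar> + 1"
  have K': "K' > 0" "K \<le> K'" unfolding K'_def by auto
  define \<delta> where "\<delta> = \<epsilon> / (2 * K')"
  have \<delta>: "\<delta> > 0" unfolding \<delta>_def using K' \<open>\<epsilon> > 0\<close> by auto
  have K\<delta>: "K' * \<delta> = \<epsilon> / 2" unfolding \<delta>_def using K' by auto
  obtain T where T: "\<forall>t\<ge>T. \<bar>f (t + \<delta>) - f t\<bar> < \<epsilon> * \<delta> / 2"
    using incr \<delta> \<open>\<epsilon> > 0\<close> by (meson half_gt_zero mult_pos_pos)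
  have "\<bar>f' t\<bar> < \<epsilon>" if "t \<ge> max T 0" for t
  proof -
    have t0: "t \<ge> 0" using that by simp
    obtain z where z: "t < z" "z < t + \<delta>" "f (t + \<delta>) - f t = (t + \<delta> - t) * f' z"
      using D0_mvt[OF assms(1) t0, of "t + \<delta>"] \<delta> by auto
    have "\<bar>f' z - f' t\<bar> \<le> K * \<bar>z - t\<bar>" using lip t0 z by (meson less_imp_le order_trans)
    also have "\<dots> \<le> K' * \<delta>" using z K' 
      by (smt (verit, best) mult_less_cancel_left mult_nonneg_nonneg mult_right_mono)
    finally have 1: "\<bar>f' z - f' t\<bar> \<le> \<epsilon> / 2" using K\<delta> by simp
    have a: "\<bar>f (t + \<delta>) - f t\<bar> < \<epsilon> * \<delta> / 2" using T that by auto
    have "\<bar>f (t + \<delta>) - f t\<bar> = \<delta> * \<bar>f' z\<bar>" using z(3) \<delta> by (simp add: abs_mult)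
    then have "\<delta> * \<bar>f' z\<bar> < \<epsilon> * \<delta> / 2" using a by simp
    then have "\<bar>f' z\<bar> < \<epsilon> / 2" using \<delta> by (simp add: field_simps)
    then show ?thesis using 1 by linarith
  qed
  then show "\<forall>\<^sub>F x in at_top. dist (f' x) 0 < \<epsilon>"
    by (auto simp: eventually_at_top_linorder intro!: exI[of _ "max T 0"])
qed

lemma incr_of_tendsto:
  fixes f :: "real \<Rightarrow> real"
  assumes "(f \<longlongrightarrow> L) at_top"
  shows "\<forall>\<eta>>0. \<forall>\<delta>>0. \<exists>T. \<forall>t\<ge>T. \<bar>f (t + \<delta>) - f t\<bar> < (\<eta>::real)"
proof (intro allI impI)
  fix \<eta> \<delta> :: real assume "\<eta> > 0" "\<delta> > 0"
  then have "\<forall>\<^sub>F t in at_top. dist (f t) L < \<eta>/2" using assms tendstoD by (metis half_gt_zero)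
  then have "\<exists>T. \<forall>t\<ge>T. dist (f t) L < \<eta>/2" by (rule eventually_at_top_linorder[THEN iffD1])
  then obtain T where T: "\<forall>t\<ge>T. dist (f t) L < \<eta>/2" by blast
  have "\<bar>f (t + \<delta>) - f t\<bar> < \<eta>" if "t \<ge> T" for t
    using T[rule_format, of t] T[rule_format, of "t+\<delta>"] that \<open>\<delta> > 0\<close> unfolding dist_real_def by linarith
  then show "\<exists>T. \<forall>t\<ge>T. \<bar>f (t + \<delta>) - f t\<bar> < \<eta>" by blast
qed

lemma incr_of_antimono:
  fixes f :: "real \<Rightarrow> real"
  assumes mono: "\<And>s t. 0 \<le> s \<Longrightarrow> s \<le> t \<Longrightarrow> f t \<le> f s" and low: "\<forall>t\<ge>0. f t \<ge> 0"
  shows "\<forall>\<eta>>0. \<forall>\<delta>>0. \<exists>T. \<forall>t\<ge>T. \<bar>f (t + \<delta>) - f t\<bar> < (\<eta>::real)"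
proof (intro allI impI)
  fix \<eta> \<delta> :: real assume "\<eta> > 0" "\<delta> > 0"
  define L where "L = Inf (f ` {0..})"
  have bdd: "bdd_below (f ` {0..})" using low by (auto intro!: bdd_belowI[of _ 0])
  have L: "L \<le> f t" if "t \<ge> 0" for t unfolding L_def using bdd that by (auto intro!: cInf_lower)
  have "\<exists>x\<in>f ` {0..}. x < L + \<eta>" unfolding L_def
    by (rule cInf_lessD) (use \<open>\<eta> > 0\<close> in auto)
  then obtain T where T: "T \<ge> 0" "f T < L + \<eta>" by auto
  have "\<bar>f (t + \<delta>) - f t\<bar> < \<eta>" if "t \<ge> T" for t
  proof -
    have "f (t + \<delta>) \<le> f t" using mono[of t "t+\<delta>"] that T \<open>\<delta> > 0\<close> by auto
    moreover have "f t \<le> f T" using mono[of T t] that T by auto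
    moreover have "L \<le> f (t + \<delta>)" using L[of "t+\<delta>"] that T \<open>\<delta> > 0\<close> by auto
    ultimately show ?thesis using T by linarith
  qed
  then show "\<exists>T. \<forall>t\<ge>T. \<bar>f (t + \<delta>) - f t\<bar> < \<eta>" by blast
qed

definition Bd :: "(real \<Rightarrow> real) \<Rightarrow> bool" where
  "Bd f \<longleftrightarrow> (\<exists>B. \<forall>t\<ge>0. \<bar>f t\<bar> \<le> B)"
definition Lp :: "(real \<Rightarrow> real) \<Rightarrow> bool" where
  "Lp f \<longleftrightarrow> (\<exists>K. \<forall>s\<ge>0. \<forall>t\<ge>0. \<bar>f s - f t\<bar> \<le> K * \<bar>s - t\<bar>)"
definition BL where "BL f \<longleftrightarrow> Bd f \<and> Lp f"

lemma Bd_const: "Bd (\<lambda>t. c)" unfolding Bd_def by auto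
lemma Bd_add: "Bd f \<Longrightarrow> Bd g \<Longrightarrow> Bd (\<lambda>t. f t + g t)"
  unfolding Bd_def
proof (elim exE)
  fix B C assume B: "\<forall>t\<ge>0. \<bar>f t\<bar> \<le> B" and C: "\<forall>t\<ge>0. \<bar>g t\<bar> \<le> C"
  have "\<bar>f t + g t\<bar> \<le> B + C" if "t \<ge> 0" for t
    using B[rule_format, OF that] C[rule_format, OF that] by linarith
  then show "\<exists>B. \<forall>t\<ge>0. \<bar>f t + g t\<bar> \<le> B" by blast
qed
lemma Bd_minus: "Bd f \<Longrightarrow> Bd (\<lambda>t. - f t)"
  unfolding Bd_def by auto
lemma Bd_diff: "Bd f \<Longrightarrow> Bd g \<Longrightarrow> Bd (\<lambda>t. f t - g t)"
  using Bd_add[of f "\<lambda>t. - g t"] Bd_minus[of g] by simp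
lemma Bd_mult: "Bd f \<Longrightarrow> Bd g \<Longrightarrow> Bd (\<lambda>t. f t * g t)"
  unfolding Bd_def
proof (elim exE)
  fix B C assume B: "\<forall>t\<ge>0. \<bar>f t\<bar> \<le> B" and C: "\<forall>t\<ge>0. \<bar>g t\<bar> \<le> C"
  have "\<bar>f t * g t\<bar> \<le> B * C" if "t \<ge> 0" for t
    unfolding abs_mult by (rule mult_mono) (use B C that in auto)
  then show "\<exists>B. \<forall>t\<ge>0. \<bar>f t * g t\<bar> \<le> B" by blast
qed
lemma Bd_sum: "finite A \<Longrightarrow> (\<And>i. i \<in> A \<Longrightarrow> Bd (f i)) \<Longrightarrow> Bd (\<lambda>t. \<Sum>i\<in>A. f i t)"
proof (induction A rule: finite_induct)
  case empty then show ?case by (simp add: Bd_const)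
next
  case (insert x F)
  then show ?case using Bd_add[of "f x" "\<lambda>t. \<Sum>i\<in>F. f i t"] by simp
qed

lemma Lp_const: "Lp (\<lambda>t. c)" unfolding Lp_def by (auto intro!: exI[of _ 0])
lemma Lp_add: "Lp f \<Longrightarrow> Lp g \<Longrightarrow> Lp (\<lambda>t. f t + g t)"
  unfolding Lp_def
proof (elim exE)
  fix B C assume B: "\<forall>s\<ge>0. \<forall>t\<ge>0. \<bar>f s - f t\<bar> \<le> B * \<bar>s - t\<bar>" and C: "\<forall>s\<ge>0. \<forall>t\<ge>0. \<bar>g s - g t\<bar> \<le> C * \<bar>s - t\<bar>"
  have "\<bar>f s + g s - (f t + g t)\<bar> \<le> (B + C) * \<bar>s - t\<bar>" if "s \<ge> 0" "t \<ge> 0" for s t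
    using B[rule_format, OF that] C[rule_format, OF that] by (simp add: distrib_right abs_le_iff)
  then show "\<exists>K. \<forall>s\<ge>0. \<forall>t\<ge>0. \<bar>f s + g s - (f t + g t)\<bar> \<le> K * \<bar>s - t\<bar>" by blast
qed
lemma Lp_minus: "Lp f \<Longrightarrow> Lp (\<lambda>t. - f t)"
  unfolding Lp_def by (simp add: abs_minus_commute)
lemma Lp_diff: "Lp f \<Longrightarrow> Lp g \<Longrightarrow> Lp (\<lambda>t. f t - g t)"
  using Lp_add[of f "\<lambda>t. - g t"] Lp_minus[of g] by simp
lemma Lp_mult: 
  assumes "Bd f" "Bd g" "Lp f" "Lp g" shows "Lp (\<lambda>t. f t * g t)"
proof -
  obtain B where B: "\<forall>t\<ge>0. \<bar>f t\<bar> \<le> B" using assms(1) Bd_def by auto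
  obtain C where C: "\<forall>t\<ge>0. \<bar>g t\<bar> \<le> C" using assms(2) Bd_def by auto
  obtain K where K: "\<forall>s\<ge>0. \<forall>t\<ge>0. \<bar>f s - f t\<bar> \<le> K * \<bar>s - t\<bar>" using assms(3) Lp_def by auto
  obtain M where M: "\<forall>s\<ge>0. \<forall>t\<ge>0. \<bar>g s - g t\<bar> \<le> M * \<bar>s - t\<bar>" using assms(4) Lp_def by auto
  have "\<bar>f s * g s - f t * g t\<bar> \<le> (B * M + C * K) * \<bar>s - t\<bar>" if st: "s \<ge> 0" "t \<ge> 0" for s t
  proof -
    have "f s * g s - f t * g t = f s * (g s - g t) + g t * (f s - f t)" by (simp add: algebra_simps)
    then have "\<bar>f s * g s - f t * g t\<bar> \<le> \<bar>f s\<bar> * \<bar>g s - g t\<bar> + \<bar>g t\<bar> * \<bar>f s - f t\<bar>"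
      by (metis abs_mult abs_triangle_ineq)
    also have "\<dots> \<le> B * (M * \<bar>s - t\<bar>) + C * (K * \<bar>s - t\<bar>)"
      by (intro add_mono mult_mono) (use B C K M st in auto)
    finally show ?thesis by (simp add: algebra_simps)
  qed
  then show ?thesis unfolding Lp_def by blast
qed

lemma BL_const: "BL (\<lambda>t. c)" unfolding BL_def using Bd_const Lp_const by blast
lemma BL_add: "BL f \<Longrightarrow> BL g \<Longrightarrow> BL (\<lambda>t. f t + g t)" unfolding BL_def using Bd_add Lp_add by blast
lemma BL_diff: "BL f \<Longrightarrow> BL g \<Longrightarrow> BL (\<lambda>t. f t - g t)" unfolding BL_def using Bd_diff Lp_diff by blast
lemma BL_minus: "BL f \<Longrightarrow> BL (\<lambda>t. - f t)" unfolding BL_def using Bd_minus Lp_minus by blast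
lemma BL_mult: "BL f \<Longrightarrow> BL g \<Longrightarrow> BL (\<lambda>t. f t * g t)" unfolding BL_def using Bd_mult Lp_mult by blast
lemma BL_sum: "finite A \<Longrightarrow> (\<And>i. i \<in> A \<Longrightarrow> BL (f i)) \<Longrightarrow> BL (\<lambda>t. \<Sum>i\<in>A. f i t)"
proof (induction A rule: finite_induct)
  case empty then show ?case by (simp add: BL_const)
next
  case (insert x F)
  then show ?case using BL_add[of "f x" "\<lambda>t. \<Sum>i\<in>F. f i t"] by simp
qed

lemma BL_D0: assumes "D0 f f'" "Bd f" "Bd f'" shows "BL f"
proof -
  obtain B where "\<forall>t\<ge>0. \<bar>f' t\<bar> \<le> B" using assms(3) Bd_def by auto
  then have "Lp f" unfolding Lp_def using D0_lip[OF assms(1)] by blast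
  then show ?thesis using assms(2) BL_def by auto
qed

lemma Bd_sq: assumes "\<forall>t\<ge>0. (f t)^2 \<le> M" shows "Bd f"
proof -
  have "\<bar>f t\<bar> \<le> M + 1" if "t \<ge> 0" for t
  proof (cases "\<bar>f t\<bar> \<le> 1")
    case True then show ?thesis using assms[rule_format, OF that] zero_le_power2[of "f t"] by linarith
  next
    case False
    then have "\<bar>f t\<bar> * 1 \<le> \<bar>f t\<bar> * \<bar>f t\<bar>" by (intro mult_left_mono) auto
    then have "\<bar>f t\<bar> \<le> \<bar>f t\<bar> * \<bar>f t\<bar>" by simp
    also have "\<dots> = (f t)^2" by (simp add: power2_eq_square abs_mult_self_eq)
    finally show ?thesis using assms that by auto
  qed
  then show ?thesis unfolding Bd_def by blast
qed

lemma tendsto_Bd_mult_zero: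
  assumes "Bd f" "(g \<longlongrightarrow> 0) at_top" shows "((\<lambda>t. f t * g t) \<longlongrightarrow> (0::real)) at_top"
proof -
  obtain B where B: "\<forall>t\<ge>0. \<bar>f t\<bar> \<le> B" using assms(1) Bd_def by auto
  have "((\<lambda>t. B * \<bar>g t\<bar>) \<longlongrightarrow> B * 0) at_top"
    by (rule tendsto_mult[OF tendsto_const tendsto_rabs_zero[OF assms(2)]])
  then have lim: "((\<lambda>t. B * \<bar>g t\<bar>) \<longlongrightarrow> 0) at_top" by simp
  have "norm (f t * g t) \<le> B * \<bar>g t\<bar>" if "t \<ge> 0" for t
  proof -
    have "\<bar>f t\<bar> * \<bar>g t\<bar> \<le> B * \<bar>g t\<bar>" by (rule mult_right_mono) (use B that in auto)
    then show ?thesis by (simp add: abs_mult)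
  qed
  then have ev: "\<forall>\<^sub>F t in at_top. norm (f t * g t) \<le> B * \<bar>g t\<bar>"
    unfolding eventually_at_top_linorder by blast
  show ?thesis by (rule Lim_null_comparison[OF ev lim])
qed

lemma tendsto_sq_zero:
  fixes f :: "real \<Rightarrow> real"
  assumes "((\<lambda>t. (f t)^2) \<longlongrightarrow> 0) at_top" shows "(f \<longlongrightarrow> 0) at_top"
proof -
  have "((\<lambda>t. sqrt ((f t)^2)) \<longlongrightarrow> sqrt 0) at_top" by (intro tendsto_intros assms)
  then have "((\<lambda>t. \<bar>f t\<bar>) \<longlongrightarrow> 0) at_top" by simp
  then show ?thesis by (simp add: tendsto_rabs_zero_iff)
qed

lemma tendsto_le_zero:
  fixes f g :: "real \<Rightarrow> real"
  assumes "(g \<longlongrightarrow> 0) at_top" "\<forall>t\<ge>0. 0 \<le> f t \<and> f t \<le> g t" shows "(f \<longlongrightarrow> 0) at_top"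
proof -
  have "\<forall>\<^sub>F t in at_top. norm (f t) \<le> g t"
    unfolding eventually_at_top_linorder by (rule exI[of _ 0]) (use assms(2) in auto)
  then show ?thesis using Lim_null_comparison assms(1) by blast
qed

lemma nat_odd_decomp[simp]: "(x::nat) mod 2 = Suc 0 \<Longrightarrow> Suc (2 * (x div 2)) = x" by presburger
lemma nat_even_decomp[simp]: "(x::nat) mod 2 = 0 \<Longrightarrow> 2 * (x div 2) = x" by presburger

lemma Smat_even:
  assumes "k < l" shows "mulv (2*l) (Smat z) y (2*k) = z k * y (2*k+1)"
proof -
  have "mulv (2*l) (Smat z) y (2*k) = (\<Sum>j<2*l. if j = 2*k+1 then z k * y j else 0)"
    unfolding mulv_def Smat_def kron_def diagm_def amat_def
    by (rule sum.cong) auto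
  also have "\<dots> = z k * y (2*k+1)" using assms by (simp add: sum.delta)
  finally show ?thesis .
qed

lemma Smat_odd:
  assumes "k < l" shows "mulv (2*l) (Smat z) y (2*k+1) = - z k * y (2*k)"
proof -
  have "mulv (2*l) (Smat z) y (2*k+1) = (\<Sum>j<2*l. if j = 2*k then - z k * y j else 0)"
    unfolding mulv_def Smat_def kron_def diagm_def amat_def
    by (rule sum.cong) auto
  also have "\<dots> = - z k * y (2*k)" using assms by (simp add: sum.delta)
  finally show ?thesis .
qed

lemma phim_row:
  assumes "k < l" shows "mulv (2*l) (phim x) y k = - x (2*k+1) * y (2*k) + x (2*k) * y (2*k+1)"
proof -
  have "mulv (2*l) (phim x) y k = (\<Sum>j<2*l. (if j = 2*k then - x (2*k+1) * y j else 0)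
          + (if j = 2*k+1 then x (2*k) * y j else 0))"
    unfolding mulv_def phim_def by (rule sum.cong) auto
  also have "\<dots> = - x (2*k+1) * y (2*k) + x (2*k) * y (2*k+1)" using assms 
    by (simp add: sum.distrib sum.delta)
  finally show ?thesis .
qed

lemma sum_pairs: "(\<Sum>c<2*(l::nat). f c) = (\<Sum>k<l. f (2*k) + f (2*k+1))"
  by (induction l) (auto simp: sum.distrib algebra_simps)

lemma sum_swap_sym:
  assumes fin: "finite I" and sub: "\<And>i. i \<in> I \<Longrightarrow> J i \<subseteq> I"
    and sym: "\<And>i j. i \<in> I \<Longrightarrow> j \<in> I \<Longrightarrow> j \<in> J i \<longleftrightarrow> i \<in> J j"
  shows "(\<Sum>i\<in>I. \<Sum>j\<in>J i. F i j) = (\<Sum>i\<in>I. \<Sum>j\<in>J i. F j i)"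
proof -
  have "(\<Sum>i\<in>I. \<Sum>j\<in>J i. F i j) = (\<Sum>i\<in>I. \<Sum>j\<in>I. if j \<in> J i then F i j else 0)"
    by (rule sum.cong[OF refl], rule sum.mono_neutral_cong_left) (use fin sub in auto)
  also have "\<dots> = (\<Sum>j\<in>I. \<Sum>i\<in>I. if j \<in> J i then F i j else 0)" by (rule sum.swap)
  also have "\<dots> = (\<Sum>j\<in>I. \<Sum>i\<in>I. if i \<in> J j then F i j else 0)"
    by (intro sum.cong refl) (use sym in auto)
  also have "\<dots> = (\<Sum>j\<in>I. \<Sum>i\<in>J j. F i j)"
    by (rule sum.cong[OF refl], rule sum.mono_neutral_cong_right) (use fin sub in auto)
  finally show ?thesis .
qed

locale sgraph =
  fixes I :: "nat set" and J :: "nat \<Rightarrow> nat set"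
  assumes fin: "finite I" and sub: "\<And>i. i \<in> I \<Longrightarrow> J i \<subseteq> I"
    and sym: "\<And>i j. i \<in> I \<Longrightarrow> j \<in> I \<Longrightarrow> j \<in> J i \<longleftrightarrow> i \<in> J j"
begin

lemma finJ: "i \<in> I \<Longrightarrow> finite (J i)" using fin sub finite_subset by blast

lemma swap: "(\<Sum>i\<in>I. \<Sum>j\<in>J i. F i j) = (\<Sum>i\<in>I. \<Sum>j\<in>J i. F j i)"
  by (rule sum_swap_sym[OF fin sub sym])

definition ee :: "(nat \<Rightarrow> bool) \<Rightarrow> (nat \<Rightarrow> real) \<Rightarrow> nat \<Rightarrow> real" where
  "ee b p i = (\<Sum>j\<in>J i. p j - p i) - (if b i then p i else 0)"

lemma G1: "(1/2) * (\<Sum>i\<in>I. \<Sum>j\<in>J i. 2 * (p i - p j) * (p' i - p' j))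
    + (\<Sum>i\<in>I. if b i then 2 * p i * p' i else 0) = -2 * (\<Sum>i\<in>I. ee b p i * p' i)"
proof -
  have a: "(\<Sum>i\<in>I. \<Sum>j\<in>J i. (p i - p j) * p' j) = (\<Sum>i\<in>I. \<Sum>j\<in>J i. (p j - p i) * p' i)"
    by (rule swap)
  have b: "(\<Sum>i\<in>I. \<Sum>j\<in>J i. (p j - p i) * p' i) = - (\<Sum>i\<in>I. \<Sum>j\<in>J i. (p i - p j) * p' i)"
    by (simp add: sum_negf[symmetric] algebra_simps)
  have c: "(\<Sum>i\<in>I. \<Sum>j\<in>J i. 2 * (p i - p j) * (p' i - p' j))
      = 2 * (\<Sum>i\<in>I. \<Sum>j\<in>J i. (p i - p j) * p' i) - 2 * (\<Sum>i\<in>I. \<Sum>j\<in>J i. (p i - p j) * p' j)"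
    by (simp add: sum_distrib_left sum_subtractf[symmetric] algebra_simps)
  have d: "(\<Sum>i\<in>I. ee b p i * p' i) = (\<Sum>i\<in>I. \<Sum>j\<in>J i. (p j - p i) * p' i) - (\<Sum>i\<in>I. if b i then p i * p' i else 0)"
  proof -
    have d0: "ee b p i * p' i = (\<Sum>j\<in>J i. (p j - p i) * p' i) - (if b i then p i * p' i else 0)" for i
      unfolding ee_def by (cases "b i") (simp_all add: sum_distrib_right left_diff_distrib)
    show ?thesis by (simp add: d0 sum_subtractf)
  qed
  have e: "(\<Sum>i\<in>I. if b i then 2 * p i * p' i else 0) = 2 * (\<Sum>i\<in>I. if b i then p i * p' i else 0)"
    by (simp add: sum_distrib_left if_distrib mult.assoc cong: if_cong)
  show ?thesis unfolding c d e using a b by (simp add: algebra_simps)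
qed

lemma G2: "(\<Sum>i\<in>I. ee b p i * q i - ee b q i * p i) = 0"
proof -
  have 1: "(\<Sum>i\<in>I. ee b p i * q i - ee b q i * p i) = (\<Sum>i\<in>I. \<Sum>j\<in>J i. p j * q i - q j * p i)"
  proof (rule sum.cong[OF refl])
    fix i
    have "ee b p i * q i - ee b q i * p i = (\<Sum>j\<in>J i. (p j - p i) * q i) - (\<Sum>j\<in>J i. (q j - q i) * p i)"
      unfolding ee_def by (cases "b i") (simp_all add: sum_distrib_right left_diff_distrib)
    also have "\<dots> = (\<Sum>j\<in>J i. p j * q i - q j * p i)"
      by (simp add: sum_subtractf[symmetric] algebra_simps)
    finally show "ee b p i * q i - ee b q i * p i = (\<Sum>j\<in>J i. p j * q i - q j * p i)" .
  qed
  have 2: "(\<Sum>i\<in>I. \<Sum>j\<in>J i. p j * q i - q j * p i) = (\<Sum>i\<in>I. \<Sum>j\<in>J i. p i * q j - q i * p j)"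
    by (rule swap)
  have 3: "(\<Sum>i\<in>I. \<Sum>j\<in>J i. p i * q j - q i * p j) = - (\<Sum>i\<in>I. \<Sum>j\<in>J i. p j * q i - q j * p i)"
    by (simp add: sum_negf[symmetric] algebra_simps)
  show ?thesis using 1 2 3 by linarith
qed

lemma G3: "(\<Sum>i\<in>I. p i * ee b p i) = - ((1/2) * (\<Sum>i\<in>I. \<Sum>j\<in>J i. (p i - p j)^2) + (\<Sum>i\<in>I. if b i then (p i)^2 else 0))"
proof -
  have a: "(\<Sum>i\<in>I. \<Sum>j\<in>J i. p j * (p j - p i)) = (\<Sum>i\<in>I. \<Sum>j\<in>J i. p i * (p i - p j))"
    by (rule swap)
  have c: "(\<Sum>i\<in>I. \<Sum>j\<in>J i. (p i - p j)^2) = (\<Sum>i\<in>I. \<Sum>j\<in>J i. p i * (p i - p j)) + (\<Sum>i\<in>I. \<Sum>j\<in>J i. p j * (p j - p i))"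
    by (simp add: sum.distrib[symmetric] power2_eq_square algebra_simps)
  have d: "(\<Sum>i\<in>I. p i * ee b p i) = - (\<Sum>i\<in>I. \<Sum>j\<in>J i. p i * (p i - p j)) - (\<Sum>i\<in>I. if b i then (p i)^2 else 0)"
    unfolding ee_def by (simp add: sum_distrib_left sum_subtractf[symmetric] sum_negf[symmetric] algebra_simps power2_eq_square if_distrib cong: if_cong)
  show ?thesis unfolding d using a c by simp
qed

end

definition cI :: "real \<Rightarrow> real \<Rightarrow> real \<Rightarrow> real" where
  "cI \<nu> t T = (if \<nu> = 0 then T else (sin (\<nu> * (t + T)) - sin (\<nu> * t)) / \<nu>)"
definition sI :: "real \<Rightarrow> real \<Rightarrow> real \<Rightarrow> real" where
  "sI \<nu> t T = (if \<nu> = 0 then 0 else (cos (\<nu> * t) - cos (\<nu> * (t + T))) / \<nu>)"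

lemma cos_has_int: assumes "T \<ge> 0" shows "((\<lambda>s. cos (\<nu> * s)) has_integral cI \<nu> t T) {t..t+T}"
proof (cases "\<nu> = 0")
  case True
  then show ?thesis unfolding cI_def using has_integral_const_real[of "1::real" t "t+T"] assms by (simp add: real_scaleR_def)
next
  case False
  have "((\<lambda>s. cos (\<nu> * s)) has_integral ((\<lambda>s. sin (\<nu> * s) / \<nu>) (t+T) - (\<lambda>s. sin (\<nu> * s) / \<nu>) t)) {t..t+T}"
  proof (rule fundamental_theorem_of_calculus)
    show "t \<le> t + T" using assms by simp
    fix x assume "x \<in> {t..t+T}"
    show "((\<lambda>s. sin (\<nu> * s) / \<nu>) has_vector_derivative cos (\<nu> * x)) (at x within {t..t+T})"
      unfolding has_real_derivative_iff_has_vector_derivative[symmetric]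
      using False by (auto intro!: derivative_eq_intros)
  qed
  then show ?thesis unfolding cI_def using False by (simp add: diff_divide_distrib)
qed

lemma sin_has_int: assumes "T \<ge> 0" shows "((\<lambda>s. sin (\<nu> * s)) has_integral sI \<nu> t T) {t..t+T}"
proof (cases "\<nu> = 0")
  case True
  then show ?thesis unfolding sI_def by simp
next
  case False
  have "((\<lambda>s. sin (\<nu> * s)) has_integral ((\<lambda>s. - cos (\<nu> * s) / \<nu>) (t+T) - (\<lambda>s. - cos (\<nu> * s) / \<nu>) t)) {t..t+T}"
  proof (rule fundamental_theorem_of_calculus)
    show "t \<le> t + T" using assms by simp
    fix x assume "x \<in> {t..t+T}"
    show "((\<lambda>s. - cos (\<nu> * s) / \<nu>) has_vector_derivative sin (\<nu> * x)) (at x within {t..t+T})"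
      unfolding has_real_derivative_iff_has_vector_derivative[symmetric]
      using False by (auto intro!: derivative_eq_intros)
  qed
  then show ?thesis unfolding sI_def using False by (simp add: diff_divide_distrib)
qed

lemma cI_bound: assumes "\<nu> \<noteq> 0" shows "\<bar>cI \<nu> t T\<bar> \<le> 2 / \<bar>\<nu>\<bar>"
proof -
  have "\<bar>sin (\<nu> * (t + T)) - sin (\<nu> * t)\<bar> \<le> 2"
    using abs_sin_le_one[of "\<nu> * (t + T)"] abs_sin_le_one[of "\<nu> * t"] by linarith
  then show ?thesis unfolding cI_def using assms by (simp add: abs_divide divide_right_mono)
qed

lemma sI_bound: assumes "\<nu> \<noteq> 0" shows "\<bar>sI \<nu> t T\<bar> \<le> 2 / \<bar>\<nu>\<bar>"
proof -
  have "\<bar>cos (\<nu> * t) - cos (\<nu> * (t + T))\<bar> \<le> 2"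
    using abs_cos_le_one[of "\<nu> * (t + T)"] abs_cos_le_one[of "\<nu> * t"] by linarith
  then show ?thesis unfolding sI_def using assms by (simp add: abs_divide divide_right_mono)
qed

lemma prod_trig:
  fixes a1 a2 b1 b2 w1 w2 s :: real shows
  "(a1 * cos (w1 * s) + b1 * sin (w1 * s)) * (a2 * cos (w2 * s) + b2 * sin (w2 * s))
   = 1/2 * ((a1*a2 + b1*b2) * cos ((w1 - w2) * s) + (a1*a2 - b1*b2) * cos ((w1 + w2) * s)
          + (a1*b2 + b1*a2) * sin ((w1 + w2) * s) + (b1*a2 - a1*b2) * sin ((w1 - w2) * s))"
  by (simp add: left_diff_distrib distrib_right cos_diff cos_add sin_add sin_diff algebra_simps)


lemma cI_mul: assumes "g > 0" "\<bar>\<nu>\<bar> \<ge> g" shows "\<bar>X * cI \<nu> t T\<bar> \<le> \<bar>X\<bar> * (2 / g)"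
proof -
  have "\<bar>cI \<nu> t T\<bar> \<le> 2 / \<bar>\<nu>\<bar>" using cI_bound assms by auto
  also have "\<dots> \<le> 2 / g" using assms by (intro divide_left_mono) auto
  finally show ?thesis unfolding abs_mult by (intro mult_left_mono) auto
qed

lemma sI_mul: assumes "g > 0" "\<bar>\<nu>\<bar> \<ge> g" shows "\<bar>X * sI \<nu> t T\<bar> \<le> \<bar>X\<bar> * (2 / g)"
proof -
  have "\<bar>sI \<nu> t T\<bar> \<le> 2 / \<bar>\<nu>\<bar>" using sI_bound assms by auto
  also have "\<dots> \<le> 2 / g" using assms by (intro divide_left_mono) auto
  finally show ?thesis unfolding abs_mult by (intro mult_left_mono) auto
qed

lemma coef_bound:
  fixes pa pb qa qb :: real
  shows "\<bar>pa*qa + pb*qb\<bar> \<le> (\<bar>pa\<bar> + \<bar>pb\<bar>) * (\<bar>qa\<bar> + \<bar>qb\<bar>)"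
    "\<bar>pa*qa - pb*qb\<bar> \<le> (\<bar>pa\<bar> + \<bar>pb\<bar>) * (\<bar>qa\<bar> + \<bar>qb\<bar>)"
    "\<bar>pa*qb + pb*qa\<bar> \<le> (\<bar>pa\<bar> + \<bar>pb\<bar>) * (\<bar>qa\<bar> + \<bar>qb\<bar>)"
    "\<bar>pb*qa - pa*qb\<bar> \<le> (\<bar>pa\<bar> + \<bar>pb\<bar>) * (\<bar>qa\<bar> + \<bar>qb\<bar>)"
proof -
  have e: "(\<bar>pa\<bar> + \<bar>pb\<bar>) * (\<bar>qa\<bar> + \<bar>qb\<bar>) = \<bar>pa*qa\<bar> + \<bar>pa*qb\<bar> + \<bar>pb*qa\<bar> + \<bar>pb*qb\<bar>"
    by (simp add: abs_mult algebra_simps)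
  have p: "0 \<le> \<bar>pa*qb\<bar>" "0 \<le> \<bar>pb*qa\<bar>" "0 \<le> \<bar>pa*qa\<bar>" "0 \<le> \<bar>pb*qb\<bar>" by auto
  show "\<bar>pa*qa + pb*qb\<bar> \<le> (\<bar>pa\<bar> + \<bar>pb\<bar>) * (\<bar>qa\<bar> + \<bar>qb\<bar>)"
    unfolding e using abs_triangle_ineq[of "pa*qa" "pb*qb"] p by linarith
  show "\<bar>pa*qa - pb*qb\<bar> \<le> (\<bar>pa\<bar> + \<bar>pb\<bar>) * (\<bar>qa\<bar> + \<bar>qb\<bar>)"
    unfolding e using abs_triangle_ineq4[of "pa*qa" "pb*qb"] p by linarith
  show "\<bar>pa*qb + pb*qa\<bar> \<le> (\<bar>pa\<bar> + \<bar>pb\<bar>) * (\<bar>qa\<bar> + \<bar>qb\<bar>)"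
    unfolding e using abs_triangle_ineq[of "pa*qb" "pb*qa"] p by linarith
  show "\<bar>pb*qa - pa*qb\<bar> \<le> (\<bar>pa\<bar> + \<bar>pb\<bar>) * (\<bar>qa\<bar> + \<bar>qb\<bar>)"
    unfolding e using abs_triangle_ineq4[of "pb*qa" "pa*qb"] p by linarith
qed

lemma lin2: "0 \<le> Z \<Longrightarrow> (L::real) = R + 1/2*(x + y) \<Longrightarrow> -Z \<le> x \<Longrightarrow> -Z \<le> y \<Longrightarrow> R - 2*Z \<le> L" unfolding distrib_left by linarith
lemma lin4: "0 \<le> Z \<Longrightarrow> (L::real) = 1/2*(x1 + x2 + x3 + x4) \<Longrightarrow> -Z \<le> x1 \<Longrightarrow> -Z \<le> x2 \<Longrightarrow> -Z \<le> x3 \<Longrightarrow> -Z \<le> x4 \<Longrightarrow> 0 - 2*Z \<le> L" unfolding distrib_left by linarith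

lemma term_bound:
  fixes pa pb qa qb d s g t T :: real
  assumes g: "g > 0" and s: "\<bar>s\<bar> \<ge> g" and d: "d = 0 \<or> \<bar>d\<bar> \<ge> g"
  shows "1/2 * ((pa*qa + pb*qb) * cI d t T + (pa*qa - pb*qb) * cI s t T
          + (pa*qb + pb*qa) * sI s t T + (pb*qa - pa*qb) * sI d t T)
     \<ge> (if d = 0 then T/2 * (pa*qa + pb*qb) else 0) - 4 * ((\<bar>pa\<bar> + \<bar>pb\<bar>) * (\<bar>qa\<bar> + \<bar>qb\<bar>)) / g"
proof -
  define M where "M = (\<bar>pa\<bar> + \<bar>pb\<bar>) * (\<bar>qa\<bar> + \<bar>qb\<bar>)"
  note cb = coef_bound[where pa=pa and pb=pb and qa=qa and qb=qb, folded M_def]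
  have g2: "0 < 2 / g" using g by simp
  have X2: "\<bar>(pa*qa - pb*qb) * cI s t T\<bar> \<le> M * (2/g)"
    using cI_mul[OF g s, of "pa*qa - pb*qb" t T] cb(2) g2 by (meson mult_right_mono less_imp_le order_trans)
  have X3: "\<bar>(pa*qb + pb*qa) * sI s t T\<bar> \<le> M * (2/g)"
    using sI_mul[OF g s, of "pa*qb + pb*qa" t T] cb(3) g2 by (meson mult_right_mono less_imp_le order_trans)
  define Z where "Z = M * (2/g)"
  have e: "4 * M / g = 2 * Z" unfolding Z_def by simp
  have Z0: "0 \<le> Z" unfolding Z_def M_def using g by simp
  define X2 where "X2 = (pa*qa - pb*qb) * cI s t T"
  define X3 where "X3 = (pa*qb + pb*qa) * sI s t T"
  have X2': "\<bar>X2\<bar> \<le> Z" using X2 unfolding X2_def Z_def .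
  have X3': "\<bar>X3\<bar> \<le> Z" using X3 unfolding X3_def Z_def .
  show ?thesis
  proof (cases "d = 0")
    case True
    then have "cI d t T = T" "sI d t T = 0" unfolding cI_def sI_def by auto
    then have "1/2 * ((pa*qa + pb*qb) * cI d t T + (pa*qa - pb*qb) * cI s t T
          + (pa*qb + pb*qa) * sI s t T + (pb*qa - pa*qb) * sI d t T) = T/2 * (pa*qa + pb*qb) + 1/2 * (X2 + X3)"
      unfolding X2_def X3_def by (simp add: algebra_simps)
    moreover have "-Z \<le> X2" "-Z \<le> X3" using X2' X3' by (simp_all add: abs_le_iff)
    ultimately show ?thesis unfolding M_def[symmetric] e if_P[OF True] by (rule lin2[OF Z0])
  next
    case False
    then have dg: "\<bar>d\<bar> \<ge> g" using d by auto
    define X1 where "X1 = (pa*qa + pb*qb) * cI d t T"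
    define X4 where "X4 = (pb*qa - pa*qb) * sI d t T"
    have X1: "\<bar>X1\<bar> \<le> Z" unfolding X1_def Z_def
      using cI_mul[OF g dg, of "pa*qa + pb*qb" t T] cb(1) g2 by (meson mult_right_mono less_imp_le order_trans)
    have X4: "\<bar>X4\<bar> \<le> Z" unfolding X4_def Z_def
      using sI_mul[OF g dg, of "pb*qa - pa*qb" t T] cb(4) g2 by (meson mult_right_mono less_imp_le order_trans)
    have "1/2 * ((pa*qa + pb*qb) * cI d t T + (pa*qa - pb*qb) * cI s t T
          + (pa*qb + pb*qa) * sI s t T + (pb*qa - pa*qb) * sI d t T) = 1/2 * (X1 + X2 + X3 + X4)"
      unfolding X1_def X2_def X3_def X4_def by simp
    moreover have "-Z \<le> X1" "-Z \<le> X2" "-Z \<le> X3" "-Z \<le> X4" using X1 X2' X3' X4 by (simp_all add: abs_le_iff)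
    ultimately show ?thesis unfolding M_def[symmetric] e if_not_P[OF False] by (rule lin4[OF Z0])
  qed
qed

locale sys =
  fixes N l :: nat and \<omega>0 :: rvec and v :: "real \<Rightarrow> rvec"
    and E :: "nat \<Rightarrow> nat \<Rightarrow> bool"
    and \<eta> :: "nat \<Rightarrow> real \<Rightarrow> rvec" and \<omega> :: "nat \<Rightarrow> real \<Rightarrow> rvec"
    and \<mu>1 \<mu>2 :: real
  assumes N_pos: "N > 0" and l_pos: "l > 0"
    and omega_pos: "\<forall>k<l. \<omega>0 k > 0"
    and omega_distinct: "\<forall>k<l. \<forall>k'<l. k \<noteq> k' \<longrightarrow> \<omega>0 k \<noteq> \<omega>0 k'"
    and leader: "\<forall>t\<ge>0. \<forall>k<2*l.
        ((\<lambda>s. v s k) has_real_derivative mulv (2*l) (Smat \<omega>0) (v t) k) (at t within {0..})"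
    and E_nodes: "\<forall>i j. E j i \<longrightarrow> j \<le> N \<and> i \<le> N"
    and spanning: "\<forall>i\<in>{1..N}. E\<^sup>*\<^sup>* 0 i"
    and undirected: "\<forall>i\<in>{1..N}. \<forall>j\<in>{1..N}. E j i \<longleftrightarrow> E i j"
    and mu_pos: "\<mu>1 > 0" "\<mu>2 > 0"
    and eta0: "\<forall>t. \<eta> 0 t = v t"
    and eta_ode: "\<forall>i\<in>{1..N}. \<forall>t\<ge>0. \<forall>k<2*l.
        ((\<lambda>s. \<eta> i s k) has_real_derivative
           (mulv (2*l) (Smat (\<omega> i t)) (\<eta> i t) k
            + \<mu>1 * (\<Sum>j\<in>{j. j \<le> N \<and> E j i}. \<eta> j t k - \<eta> i t k))) (at t within {0..})"
    and omega_ode: "\<forall>i\<in>{1..N}. \<forall>t\<ge>0. \<forall>k<l.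
        ((\<lambda>s. \<omega> i s k) has_real_derivative
           \<mu>2 * mulv (2*l) (phim (\<lambda>c. \<Sum>j\<in>{j. j \<le> N \<and> E j i}. \<eta> j t c - \<eta> i t c))
                      (\<eta> i t) k) (at t within {0..})"
    and v_init: "\<forall>k<l. v 0 (2*k) \<noteq> 0 \<or> v 0 (2*k+1) \<noteq> 0"
begin

definition "I = {1..N}"
definition "J i = {j \<in> {1..N}. E j i}"
definition "P i k t = \<eta> i t (2*k) - v t (2*k)"
definition "Q i k t = \<eta> i t (2*k+1) - v t (2*k+1)"
definition "W i k t = \<omega> i t k - \<omega>0 k"
definition "vp k t = v t (2*k)"
definition "vq k t = v t (2*k+1)"
definition "eP i k t = (\<Sum>j\<in>{j. j \<le> N \<and> E j i}. \<eta> j t (2*k) - \<eta> i t (2*k))"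
definition "eQ i k t = (\<Sum>j\<in>{j. j \<le> N \<and> E j i}. \<eta> j t (2*k+1) - \<eta> i t (2*k+1))"
definition "Pd i k t = \<omega>0 k * Q i k t + W i k t * (Q i k t + vq k t) + \<mu>1 * eP i k t"
definition "Qd i k t = - \<omega>0 k * P i k t - W i k t * (P i k t + vp k t) + \<mu>1 * eQ i k t"
definition "Wd i k t = \<mu>2 * (- eQ i k t * (P i k t + vp k t) + eP i k t * (Q i k t + vq k t))"

lemma sg: "sgraph I J"
  by unfold_locales (use undirected in \<open>auto simp: I_def J_def\<close>)

lemma D0_vp: "k < l \<Longrightarrow> D0 (vp k) (\<lambda>t. \<omega>0 k * vq k t)"
  unfolding D0_def vp_def vq_def
proof (intro allI impI)
  fix t :: real assume "k < l" "t \<ge> 0"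
  then show "((\<lambda>t. v t (2 * k)) has_real_derivative \<omega>0 k * v t (2 * k + 1)) (at t within {0..})"
    using leader[rule_format, of t "2*k"] Smat_even[of k l] by auto
qed

lemma D0_vq: "k < l \<Longrightarrow> D0 (vq k) (\<lambda>t. - \<omega>0 k * vp k t)"
proof -
  assume k: "k < l"
  have c: "2*k+1 < 2*l" using k by simp
  show ?thesis unfolding D0_def vp_def vq_def
  proof (intro allI impI)
    fix t :: real assume "t \<ge> 0"
    then show "((\<lambda>t. v t (2 * k + 1)) has_real_derivative - \<omega>0 k * v t (2 * k)) (at t within {0..})"
      using leader[rule_format, of t "2*k+1"] Smat_odd[OF k] c by auto
  qed
qed

lemma D0_P: assumes "i \<in> I" "k < l" shows "D0 (P i k) (Pd i k)"
  unfolding D0_def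
proof (intro allI impI)
  fix t :: real assume t: "t \<ge> 0"
  have c: "2*k < 2*l" using assms by simp
  have "((\<lambda>s. \<eta> i s (2*k) - v s (2*k)) has_real_derivative
      (\<omega> i t k * \<eta> i t (2*k+1) + \<mu>1 * eP i k t) - \<omega>0 k * v t (2*k+1)) (at t within {0..})"
    using eta_ode[rule_format, of i t "2*k"] leader[rule_format, of t "2*k"] assms t c
      Smat_even[OF assms(2)] unfolding I_def eP_def by (auto intro!: derivative_eq_intros)
  moreover have "(\<omega> i t k * \<eta> i t (2*k+1) + \<mu>1 * eP i k t) - \<omega>0 k * v t (2*k+1) = Pd i k t"
    unfolding Pd_def Q_def W_def vq_def by (simp add: algebra_simps)
  ultimately show "(P i k has_real_derivative Pd i k t) (at t within {0..})"
    unfolding P_def by simp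
qed

lemma D0_Q: assumes "i \<in> I" "k < l" shows "D0 (Q i k) (Qd i k)"
  unfolding D0_def
proof (intro allI impI)
  fix t :: real assume t: "t \<ge> 0"
  have c: "2*k+1 < 2*l" using assms by simp
  have "((\<lambda>s. \<eta> i s (2*k+1) - v s (2*k+1)) has_real_derivative
      (- \<omega> i t k * \<eta> i t (2*k) + \<mu>1 * eQ i k t) - (- \<omega>0 k * v t (2*k))) (at t within {0..})"
    using eta_ode[rule_format, of i t "2*k+1"] leader[rule_format, of t "2*k+1"] assms t c
      Smat_odd[OF assms(2)] unfolding I_def eQ_def by (auto intro!: derivative_eq_intros)
  moreover have "(- \<omega> i t k * \<eta> i t (2*k) + \<mu>1 * eQ i k t) - (- \<omega>0 k * v t (2*k)) = Qd i k t"
    unfolding Qd_def P_def W_def vp_def by (simp add: algebra_simps)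
  ultimately show "(Q i k has_real_derivative Qd i k t) (at t within {0..})"
    unfolding Q_def by simp
qed

lemma D0_W: assumes "i \<in> I" "k < l" shows "D0 (W i k) (Wd i k)"
  unfolding D0_def
proof (intro allI impI)
  fix t :: real assume t: "t \<ge> 0"
  have "((\<lambda>s. \<omega> i s k - \<omega>0 k) has_real_derivative
      \<mu>2 * (- eQ i k t * \<eta> i t (2*k) + eP i k t * \<eta> i t (2*k+1))) (at t within {0..})"
    using omega_ode[rule_format, of i t k] assms t phim_row[OF assms(2)]
    unfolding I_def eP_def eQ_def by (auto intro!: derivative_eq_intros)
  moreover have "\<mu>2 * (- eQ i k t * \<eta> i t (2*k) + eP i k t * \<eta> i t (2*k+1)) = Wd i k t"
    unfolding Wd_def P_def Q_def vp_def vq_def by (simp add: algebra_simps)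
  ultimately show "(W i k has_real_derivative Wd i k t) (at t within {0..})"
    unfolding W_def by simp
qed

lemma P0: "P 0 k t = 0" "Q 0 k t = 0" unfolding P_def Q_def using eta0 by auto

lemma nb_split: assumes "i \<in> I"
  shows "(\<Sum>j\<in>{j. j \<le> N \<and> E j i}. g j) = (\<Sum>j\<in>J i. g j) + (if E 0 i then g 0 else 0)"
proof -
  have eq: "{j. j \<le> N \<and> E j i} = J i \<union> (if E 0 i then {0} else {})"
  proof (rule set_eqI)
    fix x
    show "x \<in> {j. j \<le> N \<and> E j i} \<longleftrightarrow> x \<in> J i \<union> (if E 0 i then {0} else {})"
      unfolding J_def using E_nodes by (cases "x = 0") auto
  qed
  have "finite (J i)" unfolding J_def by auto
  moreover have "J i \<inter> (if E 0 i then {0} else {}) = {}" unfolding J_def by auto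
  ultimately show ?thesis unfolding eq by (subst sum.union_disjoint) auto
qed

lemma eP_J: "i \<in> I \<Longrightarrow> eP i k t = sgraph.ee J (\<lambda>i. E 0 i) (\<lambda>j. P j k t) i"
  unfolding eP_def sgraph.ee_def[OF sg] 
  by (subst nb_split) (auto simp: P_def eta0)

lemma eQ_J: "i \<in> I \<Longrightarrow> eQ i k t = sgraph.ee J (\<lambda>i. E 0 i) (\<lambda>j. Q j k t) i"
  unfolding eQ_def sgraph.ee_def[OF sg] 
  by (subst nb_split) (auto simp: Q_def eta0)

end

context sys begin

sublocale G: sgraph I J by (rule sg)

definition "V k t = (1/2) * (\<Sum>i\<in>I. \<Sum>j\<in>J i. (P i k t - P j k t)^2 + (Q i k t - Q j k t)^2)
   + (\<Sum>i\<in>I. if E 0 i then (P i k t)^2 + (Q i k t)^2 else 0)"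
definition "Lk k t = V k t + (1/\<mu>2) * (\<Sum>i\<in>I. (W i k t)^2)"
definition "Ld k t = -2 * \<mu>1 * (\<Sum>i\<in>I. (eP i k t)^2 + (eQ i k t)^2)"

lemma JI: "i \<in> I \<Longrightarrow> j \<in> J i \<Longrightarrow> j \<in> I" unfolding I_def J_def by auto
lemma finI: "finite I" unfolding I_def by auto

lemma D0_L: assumes k: "k < l" shows "D0 (Lk k) (Ld k)"
  unfolding D0_def
proof (intro allI impI)
  fix t :: real assume t: "t \<ge> 0"
  have dP: "((\<lambda>s. P i k s) has_real_derivative Pd i k t) (at t within {0..})" if "i \<in> I" for i
    using D0_P[OF that k] t unfolding D0_def by auto
  have dQ: "((\<lambda>s. Q i k s) has_real_derivative Qd i k t) (at t within {0..})" if "i \<in> I" for i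
    using D0_Q[OF that k] t unfolding D0_def by auto
  have dW: "((\<lambda>s. W i k s) has_real_derivative Wd i k t) (at t within {0..})" if "i \<in> I" for i
    using D0_W[OF that k] t unfolding D0_def by auto
  have d1: "((\<lambda>s. (P i k s - P j k s)^2 + (Q i k s - Q j k s)^2) has_real_derivative
     2 * (P i k t - P j k t) * (Pd i k t - Pd j k t) + 2 * (Q i k t - Q j k t) * (Qd i k t - Qd j k t)) (at t within {0..})"
    if "i \<in> I" "j \<in> I" for i j
    using that by (auto intro!: derivative_eq_intros dP dQ) (simp add: algebra_simps)
  have d2: "((\<lambda>s. if E 0 i then (P i k s)^2 + (Q i k s)^2 else 0) has_real_derivative
     (if E 0 i then 2 * P i k t * Pd i k t + 2 * Q i k t * Qd i k t else 0)) (at t within {0..})"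
    if "i \<in> I" for i
    using that by (cases "E 0 i") (auto intro!: derivative_eq_intros dP dQ)
  have d3: "((\<lambda>s. (W i k s)^2) has_real_derivative 2 * W i k t * Wd i k t) (at t within {0..})"
    if "i \<in> I" for i
    using that by (auto intro!: derivative_eq_intros dW)
  define R where "R = (1/2) * (\<Sum>i\<in>I. \<Sum>j\<in>J i. 2 * (P i k t - P j k t) * (Pd i k t - Pd j k t) + 2 * (Q i k t - Q j k t) * (Qd i k t - Qd j k t))
     + (\<Sum>i\<in>I. if E 0 i then 2 * P i k t * Pd i k t + 2 * Q i k t * Qd i k t else 0)
     + (1/\<mu>2) * (\<Sum>i\<in>I. 2 * W i k t * Wd i k t)"
  have hA: "((\<lambda>s. \<Sum>i\<in>I. \<Sum>j\<in>J i. (P i k s - P j k s)^2 + (Q i k s - Q j k s)^2) has_real_derivative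
      (\<Sum>i\<in>I. \<Sum>j\<in>J i. 2 * (P i k t - P j k t) * (Pd i k t - Pd j k t) + 2 * (Q i k t - Q j k t) * (Qd i k t - Qd j k t))) (at t within {0..})"
    by (rule DERIV_sum, rule DERIV_sum, rule d1) (auto intro: JI)
  have hB: "((\<lambda>s. \<Sum>i\<in>I. if E 0 i then (P i k s)^2 + (Q i k s)^2 else 0) has_real_derivative
     (\<Sum>i\<in>I. if E 0 i then 2 * P i k t * Pd i k t + 2 * Q i k t * Qd i k t else 0)) (at t within {0..})"
    by (rule DERIV_sum, rule d2) auto
  have hC: "((\<lambda>s. \<Sum>i\<in>I. (W i k s)^2) has_real_derivative (\<Sum>i\<in>I. 2 * W i k t * Wd i k t)) (at t within {0..})"
    by (rule DERIV_sum, rule d3) auto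
  have "(Lk k has_real_derivative R) (at t within {0..})"
    unfolding Lk_def V_def R_def
    using DERIV_add[OF DERIV_add[OF DERIV_cmult[OF hA, of "1/2"] hB] DERIV_cmult[OF hC, of "1/\<mu>2"]] by simp
  moreover have "R = Ld k t"
  proof -
    let ?b = "\<lambda>i. E 0 i"
    have s1: "(\<Sum>i\<in>I. \<Sum>j\<in>J i. 2 * (P i k t - P j k t) * (Pd i k t - Pd j k t) + 2 * (Q i k t - Q j k t) * (Qd i k t - Qd j k t))
       = (\<Sum>i\<in>I. \<Sum>j\<in>J i. 2 * (P i k t - P j k t) * (Pd i k t - Pd j k t)) + (\<Sum>i\<in>I. \<Sum>j\<in>J i. 2 * (Q i k t - Q j k t) * (Qd i k t - Qd j k t))"
      by (simp add: sum.distrib)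
    have s2: "(\<Sum>i\<in>I. if E 0 i then 2 * P i k t * Pd i k t + 2 * Q i k t * Qd i k t else 0)
       = (\<Sum>i\<in>I. if E 0 i then 2 * P i k t * Pd i k t else 0) + (\<Sum>i\<in>I. if E 0 i then 2 * Q i k t * Qd i k t else 0)"
      unfolding sum.distrib[symmetric] by (rule sum.cong) auto
    have gP: "(1/2) * (\<Sum>i\<in>I. \<Sum>j\<in>J i. 2 * (P i k t - P j k t) * (Pd i k t - Pd j k t))
         + (\<Sum>i\<in>I. if E 0 i then 2 * P i k t * Pd i k t else 0) = -2 * (\<Sum>i\<in>I. eP i k t * Pd i k t)"
      using G.G1[of "\<lambda>j. P j k t" "\<lambda>j. Pd j k t" ?b] eP_J by simp
    have gQ: "(1/2) * (\<Sum>i\<in>I. \<Sum>j\<in>J i. 2 * (Q i k t - Q j k t) * (Qd i k t - Qd j k t))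
         + (\<Sum>i\<in>I. if E 0 i then 2 * Q i k t * Qd i k t else 0) = -2 * (\<Sum>i\<in>I. eQ i k t * Qd i k t)"
      using G.G1[of "\<lambda>j. Q j k t" "\<lambda>j. Qd j k t" ?b] eQ_J by simp
    have R1: "R = -2 * (\<Sum>i\<in>I. eP i k t * Pd i k t) - 2 * (\<Sum>i\<in>I. eQ i k t * Qd i k t) + (1/\<mu>2) * (\<Sum>i\<in>I. 2 * W i k t * Wd i k t)"
      unfolding R_def s1 s2 using gP gQ by (simp add: algebra_simps)
    have per: "-2 * (eP i k t * Pd i k t) - 2 * (eQ i k t * Qd i k t) + (1/\<mu>2) * (2 * W i k t * Wd i k t)
       = -2 * \<omega>0 k * (eP i k t * Q i k t - eQ i k t * P i k t) - 2 * \<mu>1 * ((eP i k t)^2 + (eQ i k t)^2)" for i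
      unfolding Pd_def Qd_def Wd_def using mu_pos by (simp add: field_simps power2_eq_square)
    have "R = (\<Sum>i\<in>I. -2 * (eP i k t * Pd i k t) - 2 * (eQ i k t * Qd i k t) + (1/\<mu>2) * (2 * W i k t * Wd i k t))"
      unfolding R1 by (simp add: sum.distrib sum_subtractf sum_distrib_left)
    also have "\<dots> = (\<Sum>i\<in>I. -2 * \<omega>0 k * (eP i k t * Q i k t - eQ i k t * P i k t) - 2 * \<mu>1 * ((eP i k t)^2 + (eQ i k t)^2))"
      using per by simp
    also have "\<dots> = -2 * \<omega>0 k * (\<Sum>i\<in>I. eP i k t * Q i k t - eQ i k t * P i k t) + Ld k t"
      unfolding Ld_def by (simp add: sum_subtractf sum_distrib_left sum_negf right_diff_distrib)
    also have "(\<Sum>i\<in>I. eP i k t * Q i k t - eQ i k t * P i k t) = 0"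
      using G.G2[of ?b "\<lambda>j. P j k t" "\<lambda>j. Q j k t"] eP_J eQ_J by simp
    finally show ?thesis by simp
  qed
  ultimately show "(Lk k has_real_derivative Ld k t) (at t within {0..})" by simp
qed

end

lemma sqineq: "(a::real)^2 \<le> 2 * b^2 + 2 * (a - b)^2"
proof -
  have "0 \<le> (a - 2*b)^2" by simp
  then show ?thesis by (simp add: power2_eq_square algebra_simps)
qed

lemma lin_aux: "(x::real) \<le> 2*a + 2*b \<Longrightarrow> a \<le> C*V \<Longrightarrow> 1/2*b \<le> V \<Longrightarrow> x \<le> (2*C+4)*V"
proof -
  assume h: "x \<le> 2*a + 2*b" "a \<le> C*V" "1/2*b \<le> V"
  have "(2*C+4)*V = 2*(C*V) + 4*V" by (simp add: algebra_simps)
  then show ?thesis using h by linarith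
qed

context sys begin

lemma V_pair: assumes "i \<in> I" "j \<in> J i"
  shows "(1/2) * ((P i k t - P j k t)^2 + (Q i k t - Q j k t)^2) \<le> V k t"
proof -
  have "(P i k t - P j k t)^2 + (Q i k t - Q j k t)^2 \<le> (\<Sum>j\<in>J i. (P i k t - P j k t)^2 + (Q i k t - Q j k t)^2)"
    by (rule member_le_sum) (use assms G.finJ in auto)
  also have "\<dots> \<le> (\<Sum>i\<in>I. \<Sum>j\<in>J i. (P i k t - P j k t)^2 + (Q i k t - Q j k t)^2)"
    by (rule member_le_sum[of i I "\<lambda>i. \<Sum>j\<in>J i. (P i k t - P j k t)^2 + (Q i k t - Q j k t)^2"])
       (use assms finI in \<open>auto intro!: sum_nonneg\<close>)
  finally have 1: "(P i k t - P j k t)^2 + (Q i k t - Q j k t)^2 \<le> (\<Sum>i\<in>I. \<Sum>j\<in>J i. (P i k t - P j k t)^2 + (Q i k t - Q j k t)^2)" .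
  have 2: "0 \<le> (\<Sum>i\<in>I. if E 0 i then (P i k t)^2 + (Q i k t)^2 else 0)"
    by (rule sum_nonneg) auto
  have 3: "1/2 * ((P i k t - P j k t)^2 + (Q i k t - Q j k t)^2) \<le> 1/2 * (\<Sum>i\<in>I. \<Sum>j\<in>J i. (P i k t - P j k t)^2 + (Q i k t - Q j k t)^2)"
    by (rule mult_left_mono[OF 1]) simp
  show ?thesis unfolding V_def using 3 2 by linarith
qed

lemma V_b: assumes "i \<in> I" "E 0 i"
  shows "(P i k t)^2 + (Q i k t)^2 \<le> V k t"
proof -
  have 1: "(P i k t)^2 + (Q i k t)^2 \<le> (\<Sum>i\<in>I. if E 0 i then (P i k t)^2 + (Q i k t)^2 else 0)"
    using member_le_sum[of i I "\<lambda>i. if E 0 i then (P i k t)^2 + (Q i k t)^2 else 0"] assms finI by auto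
  have 2: "0 \<le> (\<Sum>i\<in>I. \<Sum>j\<in>J i. (P i k t - P j k t)^2 + (Q i k t - Q j k t)^2)"
    by (intro sum_nonneg) auto
  show ?thesis unfolding V_def using 1 2 by linarith
qed

lemma V_nonneg: "0 \<le> V k t"
  unfolding V_def by (intro add_nonneg_nonneg mult_nonneg_nonneg sum_nonneg) auto

lemma Lk_ge: "V k t \<le> Lk k t" "(1/\<mu>2) * (\<Sum>i\<in>I. (W i k t)^2) \<le> Lk k t" "0 \<le> Lk k t"
proof -
  have a: "0 \<le> (1/\<mu>2) * (\<Sum>i\<in>I. (W i k t)^2)" using mu_pos by (intro mult_nonneg_nonneg sum_nonneg) auto
  show "V k t \<le> Lk k t" "(1/\<mu>2) * (\<Sum>i\<in>I. (W i k t)^2) \<le> Lk k t" "0 \<le> Lk k t"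
    unfolding Lk_def using a V_nonneg[of k t] by linarith+
qed

lemma Lk_mono: assumes "k < l" "0 \<le> s" "s \<le> t" shows "Lk k t \<le> Lk k s"
proof (rule D0_antimono[OF D0_L[OF assms(1)] _ assms(2,3)])
  have "0 \<le> \<mu>1 * (\<Sum>i\<in>I. (eP i k t)^2 + (eQ i k t)^2)" for t
    by (intro mult_nonneg_nonneg sum_nonneg) (use mu_pos in auto)
  then show "\<forall>t\<ge>0. Ld k t \<le> 0" unfolding Ld_def by (simp add: mult.assoc)
qed

lemma W_sq_bound: assumes "k < l" "i \<in> I" "t \<ge> 0" shows "(W i k t)^2 \<le> \<mu>2 * Lk k 0"
proof -
  have "(W i k t)^2 \<le> (\<Sum>i\<in>I. (W i k t)^2)"
    using member_le_sum[of i I "\<lambda>i. (W i k t)^2"] assms finI by auto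
  moreover have "(1/\<mu>2) * (\<Sum>i\<in>I. (W i k t)^2) \<le> Lk k 0"
    using Lk_ge(2)[of k t] Lk_mono[OF assms(1) _ assms(3)] by auto
  ultimately show ?thesis using mu_pos by (simp add: field_simps)
qed

lemma reach: assumes k: "k < l" and r: "E\<^sup>*\<^sup>* 0 i"
  shows "\<exists>C. \<forall>t\<ge>0. (P i k t)^2 + (Q i k t)^2 \<le> C * V k t"
  using r
proof (induction rule: rtranclp_induct)
  case base then show ?case by (auto simp: P0 intro!: exI[of _ 0])
next
  case (step y z)
  show ?case
  proof (cases "z = 0")
    case True then show ?thesis by (auto simp: P0 intro!: exI[of _ 0])
  next
    case False
    then have zI: "z \<in> I" using E_nodes step(2) unfolding I_def by auto
    show ?thesis
    proof (cases "y = 0")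
      case True
      then have "\<forall>t\<ge>0. (P z k t)^2 + (Q z k t)^2 \<le> 1 * V k t" using V_b[OF zI] step(2) by auto
      then show ?thesis by blast
    next
      case False
      then have yJ: "y \<in> J z" using E_nodes step(2) unfolding J_def by auto
      obtain C where C: "\<forall>t\<ge>0. (P y k t)^2 + (Q y k t)^2 \<le> C * V k t" using step(3) by blast
      have "(P z k t)^2 + (Q z k t)^2 \<le> (2 * C + 4) * V k t" if "t \<ge> 0" for t
      proof -
        have "(P z k t)^2 + (Q z k t)^2 \<le> 2 * ((P y k t)^2 + (Q y k t)^2) + 2 * ((P z k t - P y k t)^2 + (Q z k t - Q y k t)^2)"
          using add_mono[OF sqineq[of "P z k t" "P y k t"] sqineq[of "Q z k t" "Q y k t"]] by (simp add: algebra_simps)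
        then show ?thesis using lin_aux C[rule_format, OF that] V_pair[OF zI yJ, of k t] by blast
      qed
      then show ?thesis by blast
    qed
  qed
qed

end

context sys begin

definition "rr k = (vp k 0)^2 + (vq k 0)^2"

lemma r_const: assumes "k < l" "t \<ge> 0" shows "(vp k t)^2 + (vq k t)^2 = rr k"
proof -
  have "D0 (\<lambda>t. (vp k t)^2 + (vq k t)^2) (\<lambda>t. 2 * vp k t * (\<omega>0 k * vq k t) + 2 * vq k t * (- \<omega>0 k * vp k t))"
    using D0_vp[OF assms(1)] D0_vq[OF assms(1)] unfolding D0_def
    by (auto intro!: derivative_eq_intros)
  from D0_const[OF this _ assms(2)] show ?thesis unfolding rr_def by (simp add: algebra_simps)
qed

lemma rr_pos: "k < l \<Longrightarrow> rr k > 0"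
  unfolding rr_def vp_def vq_def using v_init by (auto simp: add_pos_nonneg add_nonneg_pos)

lemma Bd_vp: "k < l \<Longrightarrow> Bd (vp k)"
proof (rule Bd_sq[of _ "rr k"], intro allI impI)
  fix t :: real assume "k < l" "t \<ge> 0"
  then show "(vp k t)^2 \<le> rr k" using r_const[of k t] zero_le_power2[of "vq k t"] by linarith
qed
lemma Bd_vq: "k < l \<Longrightarrow> Bd (vq k)"
proof (rule Bd_sq[of _ "rr k"], intro allI impI)
  fix t :: real assume "k < l" "t \<ge> 0"
  then show "(vq k t)^2 \<le> rr k" using r_const[of k t] zero_le_power2[of "vp k t"] by linarith
qed

lemma PQ_bound: assumes "k < l" "i \<in> I"
  shows "\<exists>C. \<forall>t\<ge>0. (P i k t)^2 + (Q i k t)^2 \<le> C * V k t \<and> 0 \<le> C"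
proof -
  have "E\<^sup>*\<^sup>* 0 i" using spanning assms unfolding I_def by auto
  then obtain C where C: "\<forall>t\<ge>0. (P i k t)^2 + (Q i k t)^2 \<le> C * V k t" using reach[OF assms(1)] by blast
  have "C * V k t \<le> \<bar>C\<bar> * V k t" for t by (rule mult_right_mono) (auto simp: V_nonneg)
  then have "\<forall>t\<ge>0. (P i k t)^2 + (Q i k t)^2 \<le> \<bar>C\<bar> * V k t \<and> 0 \<le> \<bar>C\<bar>"
    using C by (meson abs_ge_zero order_trans)
  then show ?thesis by blast
qed

lemma Bd_PQ: assumes "k < l" "i \<in> I" shows "Bd (P i k)" "Bd (Q i k)"
proof -
  obtain C where C: "\<forall>t\<ge>0. (P i k t)^2 + (Q i k t)^2 \<le> C * V k t \<and> 0 \<le> C" using PQ_bound[OF assms] by blast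
  have "C * V k t \<le> C * Lk k 0" if "t \<ge> 0" for t
  proof -
    have "V k t \<le> Lk k 0" using Lk_ge(1)[of k t] Lk_mono[OF assms(1) _ that] by auto
    then show ?thesis using C that by (intro mult_left_mono) auto
  qed
  then have b: "(P i k t)^2 + (Q i k t)^2 \<le> C * Lk k 0" if "t \<ge> 0" for t using C that by (meson order_trans)
  show "Bd (P i k)"
  proof (rule Bd_sq[of _ "C * Lk k 0"], intro allI impI)
    fix t :: real assume "t \<ge> 0"
    then show "(P i k t)^2 \<le> C * Lk k 0" using b[of t] zero_le_power2[of "Q i k t"] by linarith
  qed
  show "Bd (Q i k)"
  proof (rule Bd_sq[of _ "C * Lk k 0"], intro allI impI)
    fix t :: real assume "t \<ge> 0"
    then show "(Q i k t)^2 \<le> C * Lk k 0" using b[of t] zero_le_power2[of "P i k t"] by linarith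
  qed
qed

lemma Bd_W: assumes "k < l" "i \<in> I" shows "Bd (W i k)"
  by (rule Bd_sq[of _ "\<mu>2 * Lk k 0"]) (use W_sq_bound[OF assms] in auto)

lemma eP_fun: "i \<in> I \<Longrightarrow> eP i k = (\<lambda>t. (\<Sum>j\<in>J i. P j k t - P i k t) - (if E 0 i then P i k t else 0))"
  using eP_J unfolding G.ee_def by auto
lemma eQ_fun: "i \<in> I \<Longrightarrow> eQ i k = (\<lambda>t. (\<Sum>j\<in>J i. Q j k t - Q i k t) - (if E 0 i then Q i k t else 0))"
  using eQ_J unfolding G.ee_def by auto

lemma Bd_e_gen: assumes "i \<in> I" "\<And>j. j \<in> I \<Longrightarrow> Bd (p j)"
  shows "Bd (\<lambda>t. (\<Sum>j\<in>J i. p j t - p i t) - (if E 0 i then p i t else 0))"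
proof -
  have s: "Bd (\<lambda>t. \<Sum>j\<in>J i. p j t - p i t)"
    by (rule Bd_sum[OF G.finJ[OF assms(1)]]) (use assms JI in \<open>auto intro!: Bd_diff\<close>)
  show ?thesis
  proof (cases "E 0 i")
    case True then show ?thesis using Bd_diff[OF s assms(2)[OF assms(1)]] by simp
  next
    case False then show ?thesis using s by simp
  qed
qed

lemma BL_e_gen: assumes "i \<in> I" "\<And>j. j \<in> I \<Longrightarrow> BL (p j)"
  shows "BL (\<lambda>t. (\<Sum>j\<in>J i. p j t - p i t) - (if E 0 i then p i t else 0))"
proof -
  have s: "BL (\<lambda>t. \<Sum>j\<in>J i. p j t - p i t)"
    by (rule BL_sum[OF G.finJ[OF assms(1)]]) (use assms JI in \<open>auto intro!: BL_diff\<close>)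
  show ?thesis
  proof (cases "E 0 i")
    case True then show ?thesis using BL_diff[OF s assms(2)[OF assms(1)]] by simp
  next
    case False then show ?thesis using s BL_diff[OF s BL_const[of 0]] by simp
  qed
qed

lemma Bd_e: assumes "k < l" "i \<in> I" shows "Bd (eP i k)" "Bd (eQ i k)"
  using Bd_e_gen[OF assms(2), of "\<lambda>j. P j k"] Bd_e_gen[OF assms(2), of "\<lambda>j. Q j k"] Bd_PQ[OF assms(1)]
    eP_fun[OF assms(2)] eQ_fun[OF assms(2)] by auto

lemma Bd_d: assumes "k < l" "i \<in> I" shows "Bd (Pd i k)" "Bd (Qd i k)" "Bd (Wd i k)"
proof -
  note b = Bd_PQ[OF assms] Bd_W[OF assms] Bd_e[OF assms] Bd_vp[OF assms(1)] Bd_vq[OF assms(1)]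
  have "Bd (\<lambda>t. \<omega>0 k * Q i k t + W i k t * (Q i k t + vq k t) + \<mu>1 * eP i k t)"
    by (intro Bd_add Bd_mult Bd_const b)
  then show "Bd (Pd i k)" unfolding Pd_def[abs_def] .
  have "Bd (\<lambda>t. - \<omega>0 k * P i k t - W i k t * (P i k t + vp k t) + \<mu>1 * eQ i k t)"
    by (intro Bd_add Bd_diff Bd_mult Bd_const b)
  then show "Bd (Qd i k)" unfolding Qd_def[abs_def] .
  have "Bd (\<lambda>t. \<mu>2 * (- eQ i k t * (P i k t + vp k t) + eP i k t * (Q i k t + vq k t)))"
    by (intro Bd_add Bd_mult Bd_minus Bd_const b)
  then show "Bd (Wd i k)" unfolding Wd_def[abs_def] .
qed

lemma BL_base: assumes "k < l" "i \<in> I"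
  shows "BL (P i k)" "BL (Q i k)" "BL (W i k)" "BL (vp k)" "BL (vq k)"
proof -
  show "BL (P i k)" by (rule BL_D0[OF D0_P[OF assms(2,1)] Bd_PQ(1)[OF assms] Bd_d(1)[OF assms]])
  show "BL (Q i k)" by (rule BL_D0[OF D0_Q[OF assms(2,1)] Bd_PQ(2)[OF assms] Bd_d(2)[OF assms]])
  show "BL (W i k)" by (rule BL_D0[OF D0_W[OF assms(2,1)] Bd_W[OF assms] Bd_d(3)[OF assms]])
  have "Bd (\<lambda>t. \<omega>0 k * vq k t)" by (intro Bd_mult Bd_const Bd_vq assms)
  then show "BL (vp k)" by (rule BL_D0[OF D0_vp[OF assms(1)] Bd_vp[OF assms(1)]])
  have "Bd (\<lambda>t. - \<omega>0 k * vp k t)" by (intro Bd_mult Bd_const Bd_vp assms)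
  then show "BL (vq k)" by (rule BL_D0[OF D0_vq[OF assms(1)] Bd_vq[OF assms(1)]])
qed

lemma BL_e: assumes "k < l" "i \<in> I" shows "BL (eP i k)" "BL (eQ i k)"
  using BL_e_gen[OF assms(2), of "\<lambda>j. P j k"] BL_e_gen[OF assms(2), of "\<lambda>j. Q j k"] BL_base[OF assms(1)]
    eP_fun[OF assms(2)] eQ_fun[OF assms(2)] by auto

lemma BL_d: assumes "k < l" "i \<in> I" shows "BL (Pd i k)" "BL (Qd i k)"
proof -
  note b = BL_base[OF assms] BL_e[OF assms]
  have "BL (\<lambda>t. \<omega>0 k * Q i k t + W i k t * (Q i k t + vq k t) + \<mu>1 * eP i k t)"
    by (intro BL_add BL_mult BL_const b)
  then show "BL (Pd i k)" unfolding Pd_def[abs_def] .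
  have "BL (\<lambda>t. - \<omega>0 k * P i k t - W i k t * (P i k t + vp k t) + \<mu>1 * eQ i k t)"
    by (intro BL_add BL_diff BL_mult BL_const b)
  then show "BL (Qd i k)" unfolding Qd_def[abs_def] .
qed

lemma BL_Ld: assumes "k < l" shows "BL (Ld k)"
proof -
  have "BL (\<lambda>t. -2 * \<mu>1 * (\<Sum>i\<in>I. (eP i k t)^2 + (eQ i k t)^2))"
  proof (intro BL_mult BL_const)
    show "BL (\<lambda>t. \<Sum>i\<in>I. (eP i k t)^2 + (eQ i k t)^2)"
    proof (rule BL_sum[OF finI])
      fix i assume i: "i \<in> I"
      have "BL (\<lambda>t. eP i k t * eP i k t + eQ i k t * eQ i k t)"
        by (intro BL_add BL_mult BL_e[OF assms i])
      then show "BL (\<lambda>t. (eP i k t)^2 + (eQ i k t)^2)" by (simp add: power2_eq_square)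
    qed
  qed
  then show ?thesis unfolding Ld_def[abs_def] .
qed

end

context sys begin

lemma Ld_zero: assumes "k < l" shows "(Ld k \<longlongrightarrow> 0) at_top"
proof -
  obtain K where K: "\<forall>s\<ge>0. \<forall>t\<ge>0. \<bar>Ld k s - Ld k t\<bar> \<le> K * \<bar>s - t\<bar>"
    using BL_Ld[OF assms] unfolding BL_def Lp_def by blast
  show ?thesis
    by (rule barbalat[OF D0_L[OF assms] incr_of_antimono K])
       (use Lk_mono[OF assms] Lk_ge(3) in auto)
qed

lemma e_zero: assumes "k < l" "i \<in> I" shows "(eP i k \<longlongrightarrow> 0) at_top" "(eQ i k \<longlongrightarrow> 0) at_top"
proof -
  have g: "((\<lambda>t. Ld k t * (-1/(2*\<mu>1))) \<longlongrightarrow> 0 * (-1/(2*\<mu>1))) at_top"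
    by (rule tendsto_mult[OF Ld_zero[OF assms(1)] tendsto_const])
  have eq: "Ld k t * (-1/(2*\<mu>1)) = (\<Sum>i\<in>I. (eP i k t)^2 + (eQ i k t)^2)" for t
    unfolding Ld_def using mu_pos by (simp add: field_simps)
  have le: "(eP i k t)^2 + (eQ i k t)^2 \<le> (\<Sum>i\<in>I. (eP i k t)^2 + (eQ i k t)^2)" for t
    by (rule member_le_sum[of i I "\<lambda>i. (eP i k t)^2 + (eQ i k t)^2"]) (use assms finI in auto)
  have g0: "((\<lambda>t. Ld k t * (-1/(2*\<mu>1))) \<longlongrightarrow> 0) at_top" using g by simp
  have "((\<lambda>t. (eP i k t)^2) \<longlongrightarrow> 0) at_top"
  proof (rule tendsto_le_zero[OF g0], intro allI impI conjI)
    fix t :: real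
    show "0 \<le> (eP i k t)^2" by simp
    show "(eP i k t)^2 \<le> Ld k t * (-1/(2*\<mu>1))" unfolding eq using le[of t] zero_le_power2[of "eQ i k t"] by linarith
  qed
  then show "(eP i k \<longlongrightarrow> 0) at_top" by (rule tendsto_sq_zero)
  have "((\<lambda>t. (eQ i k t)^2) \<longlongrightarrow> 0) at_top"
  proof (rule tendsto_le_zero[OF g0], intro allI impI conjI)
    fix t :: real
    show "0 \<le> (eQ i k t)^2" by simp
    show "(eQ i k t)^2 \<le> Ld k t * (-1/(2*\<mu>1))" unfolding eq using le[of t] zero_le_power2[of "eP i k t"] by linarith
  qed
  then show "(eQ i k \<longlongrightarrow> 0) at_top" by (rule tendsto_sq_zero)
qed

lemma V_eq: "V k t = - (\<Sum>i\<in>I. P i k t * eP i k t) - (\<Sum>i\<in>I. Q i k t * eQ i k t)"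
proof -
  have 1: "(\<Sum>i\<in>I. P i k t * eP i k t) = (\<Sum>i\<in>I. P i k t * G.ee (\<lambda>i. E 0 i) (\<lambda>j. P j k t) i)"
    by (rule sum.cong) (auto simp: eP_J)
  have 2: "(\<Sum>i\<in>I. Q i k t * eQ i k t) = (\<Sum>i\<in>I. Q i k t * G.ee (\<lambda>i. E 0 i) (\<lambda>j. Q j k t) i)"
    by (rule sum.cong) (auto simp: eQ_J)
  have 3: "(\<Sum>i\<in>I. \<Sum>j\<in>J i. (P i k t - P j k t)^2 + (Q i k t - Q j k t)^2)
     = (\<Sum>i\<in>I. \<Sum>j\<in>J i. (P i k t - P j k t)^2) + (\<Sum>i\<in>I. \<Sum>j\<in>J i. (Q i k t - Q j k t)^2)"
    by (simp add: sum.distrib)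
  have 4: "(\<Sum>i\<in>I. if E 0 i then (P i k t)^2 + (Q i k t)^2 else 0)
     = (\<Sum>i\<in>I. if E 0 i then (P i k t)^2 else 0) + (\<Sum>i\<in>I. if E 0 i then (Q i k t)^2 else 0)"
    unfolding sum.distrib[symmetric] by (rule sum.cong) auto
  show ?thesis unfolding V_def 1 2 3 4 G.G3 by (simp add: algebra_simps)
qed

lemma V_zero: assumes "k < l" shows "(V k \<longlongrightarrow> 0) at_top"
proof -
  have "((\<lambda>t. - (\<Sum>i\<in>I. P i k t * eP i k t) - (\<Sum>i\<in>I. Q i k t * eQ i k t)) \<longlongrightarrow> - 0 - 0) at_top"
  proof (intro tendsto_diff tendsto_minus)
    show "((\<lambda>t. \<Sum>i\<in>I. P i k t * eP i k t) \<longlongrightarrow> 0) at_top"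
      using tendsto_sum[of I "\<lambda>i t. P i k t * eP i k t" "\<lambda>i. 0" at_top]
        tendsto_Bd_mult_zero[OF Bd_PQ(1)[OF assms] e_zero(1)[OF assms]] by simp
    show "((\<lambda>t. \<Sum>i\<in>I. Q i k t * eQ i k t) \<longlongrightarrow> 0) at_top"
      using tendsto_sum[of I "\<lambda>i t. Q i k t * eQ i k t" "\<lambda>i. 0" at_top]
        tendsto_Bd_mult_zero[OF Bd_PQ(2)[OF assms] e_zero(2)[OF assms]] by simp
  qed
  moreover have "V k = (\<lambda>t. - (\<Sum>i\<in>I. P i k t * eP i k t) - (\<Sum>i\<in>I. Q i k t * eQ i k t))"
    by (rule ext) (rule V_eq)
  ultimately show ?thesis by simp
qed

lemma PQ_zero: assumes "k < l" "i \<in> I" shows "(P i k \<longlongrightarrow> 0) at_top" "(Q i k \<longlongrightarrow> 0) at_top"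
proof -
  obtain C where C: "\<forall>t\<ge>0. (P i k t)^2 + (Q i k t)^2 \<le> C * V k t \<and> 0 \<le> C" using PQ_bound[OF assms] by blast
  have g: "((\<lambda>t. C * V k t) \<longlongrightarrow> C * 0) at_top" by (rule tendsto_mult[OF tendsto_const V_zero[OF assms(1)]])
  then have g0: "((\<lambda>t. C * V k t) \<longlongrightarrow> 0) at_top" by simp
  have "((\<lambda>t. (P i k t)^2) \<longlongrightarrow> 0) at_top"
  proof (rule tendsto_le_zero[OF g0], intro allI impI conjI)
    fix t :: real assume "t \<ge> 0"
    then have "(P i k t)^2 + (Q i k t)^2 \<le> C * V k t" using C by blast
    then show "(P i k t)^2 \<le> C * V k t" using zero_le_power2[of "Q i k t"] by linarith
  qed simp
  then show "(P i k \<longlongrightarrow> 0) at_top" by (rule tendsto_sq_zero)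
  have "((\<lambda>t. (Q i k t)^2) \<longlongrightarrow> 0) at_top"
  proof (rule tendsto_le_zero[OF g0], intro allI impI conjI)
    fix t :: real assume "t \<ge> 0"
    then have "(P i k t)^2 + (Q i k t)^2 \<le> C * V k t" using C by blast
    then show "(Q i k t)^2 \<le> C * V k t" using zero_le_power2[of "P i k t"] by linarith
  qed simp
  then show "(Q i k \<longlongrightarrow> 0) at_top" by (rule tendsto_sq_zero)
qed

lemma d_zero: assumes "k < l" "i \<in> I" shows "(Pd i k \<longlongrightarrow> 0) at_top" "(Qd i k \<longlongrightarrow> 0) at_top"
proof -
  obtain K where K: "\<forall>s\<ge>0. \<forall>t\<ge>0. \<bar>Pd i k s - Pd i k t\<bar> \<le> K * \<bar>s - t\<bar>"
    using BL_d(1)[OF assms] unfolding BL_def Lp_def by blast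
  show "(Pd i k \<longlongrightarrow> 0) at_top"
    by (rule barbalat[OF D0_P[OF assms(2,1)] incr_of_tendsto[OF PQ_zero(1)[OF assms]] K])
  obtain K' where K': "\<forall>s\<ge>0. \<forall>t\<ge>0. \<bar>Qd i k s - Qd i k t\<bar> \<le> K' * \<bar>s - t\<bar>"
    using BL_d(2)[OF assms] unfolding BL_def Lp_def by blast
  show "(Qd i k \<longlongrightarrow> 0) at_top"
    by (rule barbalat[OF D0_Q[OF assms(2,1)] incr_of_tendsto[OF PQ_zero(2)[OF assms]] K'])
qed

lemma W_zero: assumes "k < l" "i \<in> I" shows "(W i k \<longlongrightarrow> 0) at_top"
proof -
  note z = PQ_zero[OF assms] d_zero[OF assms] e_zero[OF assms]
  have WP: "((\<lambda>t. W i k t * P i k t) \<longlongrightarrow> 0) at_top" by (rule tendsto_Bd_mult_zero[OF Bd_W[OF assms] z(1)])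
  have WQ: "((\<lambda>t. W i k t * Q i k t) \<longlongrightarrow> 0) at_top" by (rule tendsto_Bd_mult_zero[OF Bd_W[OF assms] z(2)])
  have "((\<lambda>t. Pd i k t - \<omega>0 k * Q i k t - W i k t * Q i k t - \<mu>1 * eP i k t) \<longlongrightarrow> 0 - \<omega>0 k * 0 - 0 - \<mu>1 * 0) at_top"
    by (intro tendsto_diff tendsto_mult tendsto_const z WQ)
  moreover have "Pd i k t - \<omega>0 k * Q i k t - W i k t * Q i k t - \<mu>1 * eP i k t = W i k t * vq k t" for t
    unfolding Pd_def by (simp add: algebra_simps)
  ultimately have a: "((\<lambda>t. W i k t * vq k t) \<longlongrightarrow> 0) at_top" by simp
  have "((\<lambda>t. - Qd i k t - \<omega>0 k * P i k t - W i k t * P i k t + \<mu>1 * eQ i k t) \<longlongrightarrow> - 0 - \<omega>0 k * 0 - 0 + \<mu>1 * 0) at_top"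
    by (intro tendsto_add tendsto_diff tendsto_minus tendsto_mult tendsto_const z WP)
  moreover have "- Qd i k t - \<omega>0 k * P i k t - W i k t * P i k t + \<mu>1 * eQ i k t = W i k t * vp k t" for t
    unfolding Qd_def by (simp add: algebra_simps)
  ultimately have b: "((\<lambda>t. W i k t * vp k t) \<longlongrightarrow> 0) at_top" by simp
  have "((\<lambda>t. ((W i k t * vp k t)^2 + (W i k t * vq k t)^2) / rr k) \<longlongrightarrow> (0^2 + 0^2) / rr k) at_top"
    by (intro tendsto_divide tendsto_add tendsto_power a b tendsto_const) (use rr_pos[OF assms(1)] in auto)
  then have g0: "((\<lambda>t. ((W i k t * vp k t)^2 + (W i k t * vq k t)^2) / rr k) \<longlongrightarrow> 0) at_top" by simp
  have "((\<lambda>t. (W i k t)^2) \<longlongrightarrow> 0) at_top"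
  proof (rule tendsto_le_zero[OF g0], intro allI impI conjI)
    fix t :: real assume "t \<ge> 0"
    have "(W i k t * vp k t)^2 + (W i k t * vq k t)^2 = (W i k t)^2 * ((vp k t)^2 + (vq k t)^2)"
      by (simp add: power_mult_distrib algebra_simps)
    also have "\<dots> = (W i k t)^2 * rr k" using r_const[OF assms(1) \<open>t \<ge> 0\<close>] by simp
    finally have "((W i k t * vp k t)^2 + (W i k t * vq k t)^2) / rr k = (W i k t)^2"
      using rr_pos[OF assms(1)] by simp
    then show "(W i k t)^2 \<le> ((W i k t * vp k t)^2 + (W i k t * vq k t)^2) / rr k" by simp
  qed simp
  then show ?thesis by (rule tendsto_sq_zero)
qed

lemma part2: "\<forall>i\<in>{1..N}. \<forall>k<l. ((\<lambda>t. \<omega> i t k - \<omega>0 k) \<longlongrightarrow> 0) at_top"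
  using W_zero unfolding W_def[abs_def] I_def by auto

end

context sys begin

definition "fa k = vp k 0"
definition "fb k = vq k 0"

lemma explicit: assumes "k < l" "t \<ge> 0"
  shows "vp k t = fa k * cos (\<omega>0 k * t) + fb k * sin (\<omega>0 k * t)"
    and "vq k t = fb k * cos (\<omega>0 k * t) - fa k * sin (\<omega>0 k * t)"
proof -
  define w where "w = \<omega>0 k"
  define d1 where "d1 t = vp k t - (fa k * cos (w * t) + fb k * sin (w * t))" for t
  define d2 where "d2 t = vq k t - (fb k * cos (w * t) - fa k * sin (w * t))" for t
  have D1: "D0 d1 (\<lambda>t. w * d2 t)"
    using D0_vp[OF assms(1)] unfolding D0_def d1_def d2_def w_def
    by (auto intro!: derivative_eq_intros simp: algebra_simps)
  have D2: "D0 d2 (\<lambda>t. - w * d1 t)"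
    using D0_vq[OF assms(1)] unfolding D0_def d1_def d2_def w_def
    by (auto intro!: derivative_eq_intros simp: algebra_simps)
  have "D0 (\<lambda>t. (d1 t)^2 + (d2 t)^2) (\<lambda>t. 2 * d1 t * (w * d2 t) + 2 * d2 t * (- w * d1 t))"
    using D1 D2 unfolding D0_def by (auto intro!: derivative_eq_intros)
  from D0_const[OF this _ assms(2)]
  have "(d1 t)^2 + (d2 t)^2 = (d1 0)^2 + (d2 0)^2" by (simp add: algebra_simps)
  also have "\<dots> = 0" unfolding d1_def d2_def fa_def fb_def by simp
  finally have "d1 t = 0" "d2 t = 0" by (simp_all add: sum_power2_eq_zero_iff)
  then show "vp k t = fa k * cos (\<omega>0 k * t) + fb k * sin (\<omega>0 k * t)"
    and "vq k t = fb k * cos (\<omega>0 k * t) - fa k * sin (\<omega>0 k * t)"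
    unfolding d1_def d2_def w_def by simp_all
qed

lemma v_cont: assumes "c < 2*l" shows "continuous_on {0..} (\<lambda>s. v s c)"
  by (rule DERIV_continuous_on) (use leader assms in auto)

lemma abs_le_sq: assumes "(x::real)^2 \<le> M" shows "\<bar>x\<bar> \<le> M + 1"
proof (cases "\<bar>x\<bar> \<le> 1")
  case True then show ?thesis using assms zero_le_power2[of x] by linarith
next
  case False
  then have "\<bar>x\<bar> * 1 \<le> \<bar>x\<bar> * \<bar>x\<bar>" by (intro mult_left_mono) auto
  also have "\<dots> = x^2" by (simp add: power2_eq_square abs_mult_self_eq)
  finally show ?thesis using assms by auto
qed

end

context sys begin

definition "al x k = x (2*k) * fa k + x (2*k+1) * fb k"
definition "be x k = x (2*k) * fb k - x (2*k+1) * fa k"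
definition "gx x s = (\<Sum>k<l. al x k * cos (\<omega>0 k * s) + be x k * sin (\<omega>0 k * s))"
definition "Val x t T = (\<Sum>k<l. \<Sum>j<l. 1/2 * ((al x k * al x j + be x k * be x j) * cI (\<omega>0 k - \<omega>0 j) t T
    + (al x k * al x j - be x k * be x j) * cI (\<omega>0 k + \<omega>0 j) t T
    + (al x k * be x j + be x k * al x j) * sI (\<omega>0 k + \<omega>0 j) t T
    + (be x k * al x j - al x k * be x j) * sI (\<omega>0 k - \<omega>0 j) t T))"

lemma g_explicit: assumes "s \<ge> 0" shows "(\<Sum>c<2*l. x c * v s c) = gx x s"
  unfolding sum_pairs gx_def
proof (rule sum.cong[OF refl])
  fix k assume "k \<in> {..<l}"
  then have k: "k < l" by simp
  show "x (2*k) * v s (2*k) + x (2*k+1) * v s (2*k+1) = al x k * cos (\<omega>0 k * s) + be x k * sin (\<omega>0 k * s)"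
  proof -
    have e1: "v s (2*k) = fa k * cos (\<omega>0 k * s) + fb k * sin (\<omega>0 k * s)" using explicit(1)[OF k assms] unfolding vp_def .
    have e2: "v s (2*k+1) = fb k * cos (\<omega>0 k * s) - fa k * sin (\<omega>0 k * s)" using explicit(2)[OF k assms] unfolding vq_def .
    show ?thesis unfolding e1 e2 al_def be_def by (simp add: algebra_simps)
  qed
qed

lemma int_sq: assumes "T \<ge> 0" shows "((\<lambda>s. (gx x s)^2) has_integral Val x t T) {t..t+T}"
proof -
  have eq: "(gx x s)^2 = (\<Sum>k<l. \<Sum>j<l. 1/2 * ((al x k * al x j + be x k * be x j) * cos ((\<omega>0 k - \<omega>0 j) * s)
    + (al x k * al x j - be x k * be x j) * cos ((\<omega>0 k + \<omega>0 j) * s)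
    + (al x k * be x j + be x k * al x j) * sin ((\<omega>0 k + \<omega>0 j) * s)
    + (be x k * al x j - al x k * be x j) * sin ((\<omega>0 k - \<omega>0 j) * s)))" for s
    unfolding gx_def power2_eq_square sum_product prod_trig ..
  show ?thesis unfolding eq Val_def
    by (intro has_integral_sum finite_lessThan has_integral_mult_right has_integral_add
        cos_has_int sin_has_int assms)
qed

lemma PE_val: assumes "T \<ge> 0" "t \<ge> 0"
  shows "(\<Sum>i<2*l. \<Sum>j<2*l. x i * x j * integral {t..t+T} (\<lambda>s. v s i * v s j)) = Val x t T"
proof -
  have int: "(\<lambda>s. v s i * v s j) integrable_on {t..t+T}" if "i < 2*l" "j < 2*l" for i j
  proof (rule integrable_continuous_interval)
    have "continuous_on {0..} (\<lambda>s. v s i * v s j)"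
      by (intro continuous_on_mult v_cont that)
    then show "continuous_on {t..t+T} (\<lambda>s. v s i * v s j)"
      by (rule continuous_on_subset) (use assms in auto)
  qed
  have h1: "((\<lambda>s. \<Sum>i<2*l. \<Sum>j<2*l. x i * x j * (v s i * v s j)) has_integral
      (\<Sum>i<2*l. \<Sum>j<2*l. x i * x j * integral {t..t+T} (\<lambda>s. v s i * v s j))) {t..t+T}"
    by (intro has_integral_sum finite_lessThan has_integral_mult_right integrable_integral int) auto
  have h2: "((\<lambda>s. \<Sum>i<2*l. \<Sum>j<2*l. x i * x j * (v s i * v s j)) has_integral Val x t T) {t..t+T}"
  proof (rule has_integral_eq[OF _ int_sq[OF assms(1)]])
    fix s assume "s \<in> {t..t+T}"
    then have s: "s \<ge> 0" using assms by auto
    have "(\<Sum>i<2*l. \<Sum>j<2*l. x i * x j * (v s i * v s j)) = (\<Sum>c<2*l. x c * v s c) * (\<Sum>c<2*l. x c * v s c)"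
      unfolding sum_product by (simp add: algebra_simps)
    then show "(gx x s)^2 = (\<Sum>i<2*l. \<Sum>j<2*l. x i * x j * (v s i * v s j))"
      using g_explicit[OF s, of x] by (simp add: power2_eq_square)
  qed
  show ?thesis using has_integral_unique[OF h1 h2] .
qed

lemma Val_lower:
  assumes T: "T \<ge> 0" and g: "g > 0" and gd: "\<forall>k<l. \<forall>j<l. k \<noteq> j \<longrightarrow> g \<le> \<bar>\<omega>0 k - \<omega>0 j\<bar>"
    and gs: "\<forall>k<l. g \<le> \<omega>0 k"
  shows "Val x t T \<ge> T/2 * (\<Sum>k<l. (al x k)^2 + (be x k)^2) - 4/g * (\<Sum>k<l. \<bar>al x k\<bar> + \<bar>be x k\<bar>)^2"
proof -
  let ?m = "\<lambda>k. \<bar>al x k\<bar> + \<bar>be x k\<bar>"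
  have tb: "1/2 * ((al x k * al x j + be x k * be x j) * cI (\<omega>0 k - \<omega>0 j) t T
    + (al x k * al x j - be x k * be x j) * cI (\<omega>0 k + \<omega>0 j) t T
    + (al x k * be x j + be x k * al x j) * sI (\<omega>0 k + \<omega>0 j) t T
    + (be x k * al x j - al x k * be x j) * sI (\<omega>0 k - \<omega>0 j) t T)
    \<ge> (if k = j then T/2 * ((al x k)^2 + (be x k)^2) else 0) - 4 * (?m k * ?m j) / g"
    if kj: "k < l" "j < l" for k j
  proof -
    have s: "\<bar>\<omega>0 k + \<omega>0 j\<bar> \<ge> g" using gs omega_pos kj by fastforce
    have d: "\<omega>0 k - \<omega>0 j = 0 \<or> \<bar>\<omega>0 k - \<omega>0 j\<bar> \<ge> g" using gd kj by (cases "k = j") auto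
    have dk: "(\<omega>0 k - \<omega>0 j = 0) = (k = j)" using omega_distinct kj by auto
    have eq: "(if \<omega>0 k - \<omega>0 j = 0 then T/2 * (al x k * al x j + be x k * be x j) else 0)
        = (if k = j then T/2 * ((al x k)^2 + (be x k)^2) else 0)"
      unfolding dk by (simp add: power2_eq_square)
    note tbf = term_bound[OF g s d, where pa="al x k" and pb="be x k" and qa="al x j" and qb="be x j" and t=t and T=T]
    show ?thesis using tbf[unfolded eq] .
  qed
  have "Val x t T \<ge> (\<Sum>k<l. \<Sum>j<l. (if k = j then T/2 * ((al x k)^2 + (be x k)^2) else 0) - 4 * (?m k * ?m j) / g)"
    unfolding Val_def by (intro sum_mono tb) auto
  also have "(\<Sum>k<l. \<Sum>j<l. (if k = j then T/2 * ((al x k)^2 + (be x k)^2) else 0) - 4 * (?m k * ?m j) / g)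
      = (\<Sum>k<l. T/2 * ((al x k)^2 + (be x k)^2)) - 4/g * (\<Sum>k<l. \<Sum>j<l. ?m k * ?m j)"
    by (simp add: sum_subtractf sum_distrib_left sum_divide_distrib)
  also have "(\<Sum>k<l. \<Sum>j<l. ?m k * ?m j) = (\<Sum>k<l. ?m k)^2"
    unfolding power2_eq_square sum_product ..
  finally show ?thesis by (simp add: sum_distrib_left)
qed

lemma quad_split:
  fixes x :: "nat \<Rightarrow> real" and Y :: "nat \<Rightarrow> nat \<Rightarrow> real" shows
  "(\<Sum>i<n. \<Sum>j<n. x i * (c * Y i j - (if i = j then \<epsilon> else 0)) * x j)
   = c * (\<Sum>i<n. \<Sum>j<n. x i * x j * Y i j) - \<epsilon> * (\<Sum>i<n. (x i)^2)"
proof -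
  have "(\<Sum>j<n. x i * (c * Y i j - (if i = j then \<epsilon> else 0)) * x j)
      = c * (\<Sum>j<n. x i * x j * Y i j) - \<epsilon> * (x i)^2" if "i < n" for i
  proof -
    have "(\<Sum>j<n. x i * (c * Y i j - (if i = j then \<epsilon> else 0)) * x j)
        = (\<Sum>j<n. c * (x i * x j * Y i j)) - (\<Sum>j<n. (if i = j then \<epsilon> * (x i * x j) else 0))"
      unfolding sum_subtractf[symmetric] by (rule sum.cong) (auto simp: algebra_simps)
    also have "(\<Sum>j<n. (if i = j then \<epsilon> * (x i * x j) else 0)) = \<epsilon> * (x i)^2"
      using that by (simp add: power2_eq_square)
    finally show ?thesis by (simp add: sum_distrib_left)
  qed
  then show ?thesis by (simp add: sum_subtractf sum_distrib_left)
qed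

lemma ab_sq: "(al x k)^2 + (be x k)^2 = ((x (2*k))^2 + (x (2*k+1))^2) * rr k"
  unfolding al_def be_def rr_def fa_def fb_def by (simp add: power2_eq_square algebra_simps)

lemma ab_abs: "\<bar>al x k\<bar> + \<bar>be x k\<bar> \<le> 2 * (\<bar>fa k\<bar> + \<bar>fb k\<bar>) * (\<bar>x (2*k)\<bar> + \<bar>x (2*k+1)\<bar>)"
proof -
  have "\<bar>al x k\<bar> \<le> \<bar>x (2*k)\<bar> * \<bar>fa k\<bar> + \<bar>x (2*k+1)\<bar> * \<bar>fb k\<bar>"
    unfolding al_def by (metis abs_mult abs_triangle_ineq)
  moreover have "\<bar>be x k\<bar> \<le> \<bar>x (2*k)\<bar> * \<bar>fb k\<bar> + \<bar>x (2*k+1)\<bar> * \<bar>fa k\<bar>"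
    unfolding be_def by (metis abs_mult abs_triangle_ineq4)
  moreover have "(\<bar>x (2*k)\<bar> * \<bar>fa k\<bar> + \<bar>x (2*k+1)\<bar> * \<bar>fb k\<bar>) + (\<bar>x (2*k)\<bar> * \<bar>fb k\<bar> + \<bar>x (2*k+1)\<bar> * \<bar>fa k\<bar>)
     \<le> 2 * (\<bar>fa k\<bar> + \<bar>fb k\<bar>) * (\<bar>x (2*k)\<bar> + \<bar>x (2*k+1)\<bar>)"
    by (simp add: algebra_simps)
  ultimately show ?thesis by linarith
qed

lemma gamma_ex: "\<exists>g>0. (\<forall>k<l. \<forall>j<l. k \<noteq> j \<longrightarrow> g \<le> \<bar>\<omega>0 k - \<omega>0 j\<bar>) \<and> (\<forall>k<l. g \<le> \<omega>0 k)"
proof -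
  define S where "S = (\<lambda>(k,j). \<bar>\<omega>0 k - \<omega>0 j\<bar>) ` {(k,j). k < l \<and> j < l \<and> k \<noteq> j} \<union> \<omega>0 ` {..<l}"
  have f1: "finite {(k,j). k < l \<and> j < l \<and> k \<noteq> j}"
    by (rule finite_subset[of _ "{..<l} \<times> {..<l}"]) auto
  have fin: "finite S" unfolding S_def using f1 by simp
  have ne: "S \<noteq> {}" unfolding S_def using l_pos by auto
  have pos: "\<forall>y\<in>S. 0 < y" unfolding S_def using omega_pos omega_distinct by auto
  have "Min S > 0" using Min_gr_iff[OF fin ne] pos by auto
  moreover have "\<forall>k<l. \<forall>j<l. k \<noteq> j \<longrightarrow> Min S \<le> \<bar>\<omega>0 k - \<omega>0 j\<bar>"
  proof (intro allI impI)
    fix k j assume "k < l" "j < l" "k \<noteq> j"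
    then have "\<bar>\<omega>0 k - \<omega>0 j\<bar> \<in> S" unfolding S_def by (intro UnI1 image_eqI[of _ _ "(k,j)"]) auto
    then show "Min S \<le> \<bar>\<omega>0 k - \<omega>0 j\<bar>" by (rule Min_le[OF fin])
  qed
  moreover have "\<forall>k<l. Min S \<le> \<omega>0 k"
  proof (intro allI impI)
    fix k assume "k < l"
    then have "\<omega>0 k \<in> S" unfolding S_def by blast
    then show "Min S \<le> \<omega>0 k" by (rule Min_le[OF fin])
  qed
  ultimately show ?thesis by blast
qed

lemma rho_ex: "\<exists>\<rho>>0. \<forall>k<l. \<rho> \<le> rr k"
proof -
  have fin: "finite (rr ` {..<l})" by auto
  have ne: "rr ` {..<l} \<noteq> {}" using l_pos by auto
  have "Min (rr ` {..<l}) > 0" using Min_gr_iff[OF fin ne] rr_pos by auto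
  moreover have "\<forall>k<l. Min (rr ` {..<l}) \<le> rr k" using fin by auto
  ultimately show ?thesis by blast
qed

lemma v_bnd: "\<exists>B. \<forall>t\<ge>0. \<forall>c<2*l. \<bar>v t c\<bar> \<le> B"
proof -
  define R where "R = (\<Sum>k<l. rr k)"
  have "\<bar>v t c\<bar> \<le> R + 1" if t: "t \<ge> 0" and c: "c < 2*l" for t c
  proof -
    define k where "k = c div 2"
    have k: "k < l" using c unfolding k_def by presburger
    have rk: "rr k \<le> R" unfolding R_def
      by (rule member_le_sum) (use k rr_pos in \<open>auto intro: less_imp_le\<close>)
    have "(v t c)^2 \<le> rr k"
    proof (cases "c mod 2 = 0")
      case True
      then have "c = 2*k" unfolding k_def by simp
      then have e: "v t c = vp k t" unfolding vp_def by simp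
      have "(vp k t)^2 \<le> rr k" using r_const[OF k t] zero_le_power2[of "vq k t"] by linarith
      then show ?thesis unfolding e .
    next
      case False
      then have "c = 2*k+1" unfolding k_def by presburger
      then have e: "v t c = vq k t" unfolding vq_def by simp
      have "(vq k t)^2 \<le> rr k" using r_const[OF k t] zero_le_power2[of "vp k t"] by linarith
      then show ?thesis unfolding e .
    qed
    then show ?thesis using abs_le_sq[of "v t c" R] rk by linarith
  qed
  then show ?thesis by blast
qed

end

context sys begin

lemma sum_abs_sq: "(\<Sum>c<2*l. \<bar>x c\<bar>)^2 \<le> (\<Sum>c<2*l. (x c)^2) * (2 * real l)"
  using sum_squared_le_sum_of_squares[of "\<lambda>c. \<bar>x c\<bar>" "{..<2*l}"] by simp

lemma PE_part: "PE (2*l) v"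
proof -
  obtain g where g: "g > 0" "\<forall>k<l. \<forall>j<l. k \<noteq> j \<longrightarrow> g \<le> \<bar>\<omega>0 k - \<omega>0 j\<bar>" "\<forall>k<l. g \<le> \<omega>0 k"
    using gamma_ex by blast
  obtain \<rho> where \<rho>: "\<rho> > 0" "\<forall>k<l. \<rho> \<le> rr k" using rho_ex by blast
  define R1 where "R1 = (\<Sum>k<l. \<bar>fa k\<bar> + \<bar>fb k\<bar>)"
  define K0 where "K0 = 32 * real l * R1^2 / g"
  define T0 where "T0 = 4 * K0 / \<rho> + 1"
  have K0: "K0 \<ge> 0" unfolding K0_def using g by simp
  have T0: "T0 > 0" "K0 / T0 \<le> \<rho> / 4" 
  proof -
    have a: "4 * K0 / \<rho> \<ge> 0" using K0 \<rho> by simp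
    then show "T0 > 0" unfolding T0_def by linarith
    have "K0 = \<rho> / 4 * (4 * K0 / \<rho>)" using \<rho> by simp
    also have "\<dots> \<le> \<rho> / 4 * T0" unfolding T0_def using \<rho> by (intro mult_left_mono) auto
    finally show "K0 / T0 \<le> \<rho> / 4" using \<open>T0 > 0\<close> by (simp add: divide_le_eq)
  qed
  have main: "0 \<le> (\<Sum>i<2*l. \<Sum>j<2*l. x i * ((1/T0) * integral {t..t+T0} (\<lambda>s. v s i * v s j)
            - (if i = j then \<rho>/4 else 0)) * x j)" if t: "t \<ge> 0" for t and x :: rvec
  proof -
    define S where "S = (\<Sum>c<2*l. (x c)^2)"
    have S0: "S \<ge> 0" unfolding S_def by (intro sum_nonneg) auto
    have lhs: "(\<Sum>i<2*l. \<Sum>j<2*l. x i * ((1/T0) * integral {t..t+T0} (\<lambda>s. v s i * v s j)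
            - (if i = j then \<rho>/4 else 0)) * x j) = (1/T0) * Val x t T0 - \<rho>/4 * S"
      unfolding quad_split S_def PE_val[OF less_imp_le[OF T0(1)] t] ..
    have V1: "Val x t T0 \<ge> T0/2 * (\<Sum>k<l. (al x k)^2 + (be x k)^2) - 4/g * (\<Sum>k<l. \<bar>al x k\<bar> + \<bar>be x k\<bar>)^2"
      by (rule Val_lower[OF less_imp_le[OF T0(1)] g])
    have A: "(\<Sum>k<l. (al x k)^2 + (be x k)^2) \<ge> \<rho> * S"
    proof -
      have "\<rho> * S = (\<Sum>k<l. \<rho> * ((x (2*k))^2 + (x (2*k+1))^2))"
        unfolding S_def sum_pairs by (simp add: sum_distrib_left)
      also have "\<dots> \<le> (\<Sum>k<l. (al x k)^2 + (be x k)^2)"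
        unfolding ab_sq by (intro sum_mono) (use \<rho> in \<open>auto intro!: mult_right_mono simp: mult.commute\<close>)
      finally show ?thesis .
    qed
    have B: "(\<Sum>k<l. \<bar>al x k\<bar> + \<bar>be x k\<bar>)^2 \<le> 8 * real l * R1^2 * S"
    proof -
      have fk: "\<bar>fa k\<bar> + \<bar>fb k\<bar> \<le> R1" if "k < l" for k
        unfolding R1_def by (rule member_le_sum[of k "{..<l}" "\<lambda>k. \<bar>fa k\<bar> + \<bar>fb k\<bar>"]) (use that in auto)
      have "(\<Sum>k<l. \<bar>al x k\<bar> + \<bar>be x k\<bar>) \<le> (\<Sum>k<l. 2 * R1 * (\<bar>x (2*k)\<bar> + \<bar>x (2*k+1)\<bar>))"
      proof (rule sum_mono)
        fix k assume kk: "k \<in> {..<l}"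
        have "2 * (\<bar>fa k\<bar> + \<bar>fb k\<bar>) * (\<bar>x (2*k)\<bar> + \<bar>x (2*k+1)\<bar>) \<le> 2 * R1 * (\<bar>x (2*k)\<bar> + \<bar>x (2*k+1)\<bar>)"
        proof (rule mult_right_mono)
          show "2 * (\<bar>fa k\<bar> + \<bar>fb k\<bar>) \<le> 2 * R1" using fk[of k] kk by simp
        qed simp
        then show "\<bar>al x k\<bar> + \<bar>be x k\<bar> \<le> 2 * R1 * (\<bar>x (2*k)\<bar> + \<bar>x (2*k+1)\<bar>)" using ab_abs[of x k] by linarith
      qed
      also have "\<dots> = 2 * R1 * (\<Sum>c<2*l. \<bar>x c\<bar>)" unfolding sum_pairs by (simp add: sum_distrib_left)
      finally have le: "(\<Sum>k<l. \<bar>al x k\<bar> + \<bar>be x k\<bar>) \<le> 2 * R1 * (\<Sum>c<2*l. \<bar>x c\<bar>)" .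
      have "(\<Sum>k<l. \<bar>al x k\<bar> + \<bar>be x k\<bar>)^2 \<le> (2 * R1 * (\<Sum>c<2*l. \<bar>x c\<bar>))^2"
        by (rule power_mono[OF le]) (auto intro: sum_nonneg)
      also have "\<dots> = 4 * R1^2 * (\<Sum>c<2*l. \<bar>x c\<bar>)^2" by (simp add: power_mult_distrib)
      also have "\<dots> \<le> 4 * R1^2 * (S * (2 * real l))"
        using sum_abs_sq[of x] unfolding S_def by (intro mult_left_mono) auto
      finally show ?thesis by (simp add: algebra_simps)
    qed
    have "4/g * (\<Sum>k<l. \<bar>al x k\<bar> + \<bar>be x k\<bar>)^2 \<le> 4/g * (8 * real l * R1^2 * S)"
      using B g by (intro mult_left_mono) auto
    also have "\<dots> = K0 * S" unfolding K0_def by simp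
    finally have B': "4/g * (\<Sum>k<l. \<bar>al x k\<bar> + \<bar>be x k\<bar>)^2 \<le> K0 * S" .
    have A': "T0/2 * (\<Sum>k<l. (al x k)^2 + (be x k)^2) \<ge> T0/2 * (\<rho> * S)"
      using A T0 by (intro mult_left_mono) auto
    have Vl: "Val x t T0 \<ge> T0/2 * (\<rho> * S) - K0 * S" using V1 A' B' by linarith
    have "(1/T0) * Val x t T0 \<ge> (1/T0) * (T0/2 * (\<rho> * S) - K0 * S)"
      using Vl T0 by (intro mult_left_mono) auto
    also have "(1/T0) * (T0/2 * (\<rho> * S) - K0 * S) = \<rho>/2 * S - (K0/T0) * S"
      using T0 by (simp add: field_simps)
    finally have c1: "(1/T0) * Val x t T0 \<ge> \<rho>/2 * S - (K0/T0) * S" .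
    have c2: "(K0/T0) * S \<le> \<rho>/4 * S" using T0(2) S0 by (intro mult_right_mono) auto
    have "0 \<le> (1/T0) * Val x t T0 - \<rho>/4 * S" using c1 c2 by linarith
    then show ?thesis unfolding lhs .
  qed
  show ?thesis unfolding PE_def
  proof (intro conjI)
    show "\<exists>B. \<forall>t\<ge>0. \<forall>k<2 * l. \<bar>v t k\<bar> \<le> B" by (rule v_bnd)
    show "\<exists>\<epsilon>>0. \<exists>t0\<ge>0. \<exists>T0>0. \<forall>t\<ge>t0. \<forall>x::rvec. 0 \<le> (\<Sum>i<2 * l. \<Sum>j<2 * l. x i * (1 / T0 * integral {t..t + T0} (\<lambda>s. v s i * v s j) - (if i = j then \<epsilon> else 0)) * x j)"
      using main T0(1) \<rho>(1) by (intro exI[of _ "\<rho>/4"] conjI exI[of _ 0] exI[of _ T0]) auto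
  qed
qed

end

theorem lemma3:
  fixes N l :: nat and \<omega>0 :: rvec and v :: "real \<Rightarrow> rvec"
    and E :: "nat \<Rightarrow> nat \<Rightarrow> bool"
    and \<eta> :: "nat \<Rightarrow> real \<Rightarrow> rvec" and \<omega> :: "nat \<Rightarrow> real \<Rightarrow> rvec"
    and \<mu>1 \<mu>2 :: real
  assumes N_pos: "N > 0" and l_pos: "l > 0"
    and omega_pos: "\<forall>k<l. \<omega>0 k > 0"
    and omega_distinct: "\<forall>k<l. \<forall>k'<l. k \<noteq> k' \<longrightarrow> \<omega>0 k \<noteq> \<omega>0 k'"
    and leader: "\<forall>t\<ge>0. \<forall>k<2*l.
        ((\<lambda>s. v s k) has_real_derivative mulv (2*l) (Smat \<omega>0) (v t) k) (at t within {0..})"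
    and E_nodes: "\<forall>i j. E j i \<longrightarrow> j \<le> N \<and> i \<le> N"
    and spanning: "\<forall>i\<in>{1..N}. E\<^sup>*\<^sup>* 0 i"
    and undirected: "\<forall>i\<in>{1..N}. \<forall>j\<in>{1..N}. E j i \<longleftrightarrow> E i j"
    and mu_pos: "\<mu>1 > 0" "\<mu>2 > 0"
    and eta0: "\<forall>t. \<eta> 0 t = v t"
    and eta_ode: "\<forall>i\<in>{1..N}. \<forall>t\<ge>0. \<forall>k<2*l.
        ((\<lambda>s. \<eta> i s k) has_real_derivative
           (mulv (2*l) (Smat (\<omega> i t)) (\<eta> i t) k
            + \<mu>1 * (\<Sum>j\<in>{j. j \<le> N \<and> E j i}. \<eta> j t k - \<eta> i t k))) (at t within {0..})"
    and omega_ode: "\<forall>i\<in>{1..N}. \<forall>t\<ge>0. \<forall>k<l.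
        ((\<lambda>s. \<omega> i s k) has_real_derivative
           \<mu>2 * mulv (2*l) (phim (\<lambda>c. \<Sum>j\<in>{j. j \<le> N \<and> E j i}. \<eta> j t c - \<eta> i t c))
                      (\<eta> i t) k) (at t within {0..})"
    and v_init: "\<forall>k<l. v 0 (2*k) \<noteq> 0 \<or> v 0 (2*k+1) \<noteq> 0"
  shows "PE (2*l) v \<and>
         (\<forall>i\<in>{1..N}. \<forall>k<l. ((\<lambda>t. \<omega> i t k - \<omega>0 k) \<longlongrightarrow> 0) at_top)"
proof -
  have "sys N l \<omega>0 v E \<eta> \<omega> \<mu>1 \<mu>2"
    by (rule sys.intro) (fact assms)+
  then interpret S: sys N l \<omega>0 v E \<eta> \<omega> \<mu>1 \<mu>2 .
  show ?thesis using S.PE_part S.part2 by blast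
qed

end
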